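(* Let $\mu$ be a non-atomic Radon measure on $\mathbb{R}$ and let $w$ be a weight such that $[w]_{A_\infty}<\infty$. Then for every $\varepsilon$ with $0<\varepsilon<\dfrac{1}{4[w]_{A_\infty}-1}$ and every bounded interval $I\subset\mathbb{R}$, \[ \frac{1}{\mu(I)}\int_I w^{1+\varepsilon}\,d\mu \le 2\left(\frac{1}{\mu(I)}\int_I w\,d\mu\right)^{1+\varepsilon}. \]
   Context: A weight is a nonnegative $\mu$-measurable function on $\mathbb{R}$; $w(E)=\int_E w\,d\mu$; averages are over intervals with $0<\mu(I)<\infty$. $M$ denotes the (uncentered) Hardy–Littlewood maximal function with respect to $\mu$: $Mf(x)=\sup_{I\ni x}\frac{1}{\mu(I)}\int_I|f|\,d\mu$, supremum over intervals containing $x$. The Fujii–Wilson constant is \[ [w]_{A_\infty}:=\sup_I \frac{1}{w(I)}\int_I M(w\chi_I)\,d\mu, \] the supremum over all intervals $I$. *)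

theory Defs
  imports "HOL-Analysis.Analysis"
begin

definition enn_powr :: "ennreal \<Rightarrow> real \<Rightarrow> ennreal" where
  "enn_powr x p = (if x = \<infinity> then \<infinity> else ennreal (enn2real x powr p))"

definition avg_intervals :: "real measure \<Rightarrow> real set set" where
  "avg_intervals M = {J. is_interval J \<and> 0 < emeasure M J \<and> emeasure M J < \<infinity>}"

definition maxfun :: "real measure \<Rightarrow> (real \<Rightarrow> real) \<Rightarrow> real \<Rightarrow> ennreal" where
  "maxfun M f x =
     (SUP J \<in> {J \<in> avg_intervals M. x \<in> J}.
        (\<integral>\<^sup>+ y\<in>J. ennreal \<bar>f y\<bar> \<partial>M) / emeasure M J)"

definition wmeas :: "real measure \<Rightarrow> (real \<Rightarrow> real) \<Rightarrow> real set \<Rightarrow> ennreal" where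
  "wmeas M w E = (\<integral>\<^sup>+ x\<in>E. ennreal (w x) \<partial>M)"

text \<open>Fujii-Wilson A_infinity constant (supremum over intervals I with 0 < w(I) < infinity,
  where the ratio is meaningful).\<close>
definition FW_Ainf :: "real measure \<Rightarrow> (real \<Rightarrow> real) \<Rightarrow> ennreal" where
  "FW_Ainf M w =
     (SUP I \<in> {I. is_interval I \<and> 0 < wmeas M w I \<and> wmeas M w I < \<infinity>}.
        (\<integral>\<^sup>+ x\<in>I. maxfun M (\<lambda>y. w y * indicator I y) x \<partial>M) / wmeas M w I)"

end

theory Submission
  imports Defs "HOL-Probability.Distribution_Functions"
begin

locale RH =
  fixes M :: "real measure" and w :: "real \<Rightarrow> real" and l r :: real
  assumes Mb: "sets M = sets borel"
    and na: "\<And>x. emeasure M {x} = 0"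
    and lr: "l < r"
    and Kfin: "emeasure M {l..r} < \<infinity>"
    and Kpos: "0 < emeasure M {l..r}"
    and wm: "w \<in> borel_measurable M"
    and wnn: "\<And>x. 0 \<le> w x"
begin

definition "K = {l..r}"
definition "MK = density M (indicator K)"
definition "F = cdf MK"
definition "m = measure M K"

lemma spaceM[simp]: "space M = UNIV"
  by (metis Mb sets_eq_imp_space_eq space_borel)

lemma borel_sets: "sets M = sets borel" by (rule Mb)

lemma sets_MK[simp]: "sets MK = sets borel"
  unfolding MK_def using Mb by simp

lemma K_borel[measurable]: "K \<in> sets borel" unfolding K_def by simp

lemma emeasure_MK: "A \<in> sets borel \<Longrightarrow> emeasure MK A = emeasure M (A \<inter> K)"
proof -
  assume A: "A \<in> sets borel"
  have "emeasure MK A = (\<integral>\<^sup>+ x\<in>A. indicator K x \<partial>M)"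
    unfolding MK_def using A Mb by (subst emeasure_density) auto
  also have "\<dots> = (\<integral>\<^sup>+ x. indicator (A \<inter> K) x \<partial>M)"
    by (rule nn_integral_cong) (simp add: indicator_inter_arith mult.commute)
  also have "\<dots> = emeasure M (A \<inter> K)"
    using A Mb by (intro nn_integral_indicator) auto
  finally show ?thesis .
qed

lemma K_fin: "emeasure M K < \<infinity>" unfolding K_def by (rule Kfin)

lemma emeasure_K: "emeasure M K = ennreal m"
  unfolding m_def using K_fin by (intro emeasure_eq_ennreal_measure) (simp add: less_top)

lemma m_pos: "0 < m"
proof -
  have "0 < ennreal m" using Kpos emeasure_K unfolding K_def by simp
  moreover have "0 \<le> m" unfolding m_def by simp
  ultimately show ?thesis by (simp add: ennreal_less_iff less_le)
qed

lemma MK_fin: "finite_borel_measure MK"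
proof -
  have "emeasure MK (space MK) = emeasure M K"
  proof -
    have "space MK = UNIV" using sets_MK sets_eq_imp_space_eq by (metis space_borel)
    then show ?thesis using emeasure_MK[of UNIV] by simp
  qed
  then have "emeasure MK (space MK) \<noteq> \<infinity>" using K_fin by simp
  then show ?thesis
    unfolding finite_borel_measure_def finite_borel_measure_axioms_def
    by (simp add: finite_measureI)
qed

interpretation MKf: finite_borel_measure MK by (rule MK_fin)

lemma measure_MK: "A \<in> sets borel \<Longrightarrow> measure MK A = measure M (A \<inter> K)"
  by (simp add: measure_def emeasure_MK)

lemma F_eq: "F x = measure M ({..x} \<inter> K)"
  unfolding F_def cdf_def by (simp add: measure_MK)

lemma F_mono: "x \<le> y \<Longrightarrow> F x \<le> F y"
  unfolding F_def by (rule MKf.cdf_nondecreasing)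

lemma F_cont: "isCont F x"
proof -
  have "emeasure M ({x} \<inter> K) \<le> emeasure M {x}"
    using Mb by (intro emeasure_mono) auto
  then have "emeasure M ({x} \<inter> K) = 0" using na[of x] by simp
  then have "measure MK {x} = 0" using measure_MK[of "{x}"] by (simp add: measure_def)
  then show ?thesis unfolding F_def by (simp add: MKf.isCont_cdf)
qed

lemma F_nonneg: "0 \<le> F x" by (simp add: F_eq)

lemma K_fmeas: "K \<in> fmeasurable M"
  using K_fin Mb by (intro fmeasurableI) auto

lemma F_le_m: "F x \<le> m"
  unfolding F_eq m_def using K_fmeas Mb by (intro measure_mono_fmeasurable) auto

lemma F_low: "x < l \<Longrightarrow> F x = 0"
  unfolding F_eq K_def by (subgoal_tac "{..x} \<inter> {l..r} = {}") auto

lemma F_l: "F l = 0"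
proof -
  have "{..l} \<inter> {l..r} = {l}" using lr by auto
  then show ?thesis unfolding F_eq K_def using na by (simp add: measure_def)
qed

lemma F_high: "r \<le> x \<Longrightarrow> F x = m"
proof -
  assume "r \<le> x"
  then have "{..x} \<inter> {l..r} = {l..r}" by auto
  then show ?thesis unfolding F_eq K_def m_def by (simp only:)
qed

lemma F_diff: "x \<le> y \<Longrightarrow> F y - F x = measure M ({x<..y} \<inter> K)"
proof -
  assume "x \<le> y"
  show ?thesis
  proof (cases "x = y")
    case True then show ?thesis by simp
  next
    case False
    then have "x < y" using \<open>x \<le> y\<close> by simp
    then show ?thesis unfolding F_def by (simp add: MKf.cdf_diff_eq measure_MK)
  qed
qed

lemma F_borel[measurable]: "F \<in> borel_measurable borel"
  by (rule borel_measurable_mono) (simp add: mono_def F_mono)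

end

context RH begin

lemma nat_floor_eq: "0 \<le> (y::real) \<Longrightarrow> nat \<lfloor>y\<rfloor> = j \<longleftrightarrow> real j \<le> y \<and> y < real j + 1"
  by linarith
lemma nat_floor_lt: "0 \<le> (y::real) \<Longrightarrow> y < real n \<Longrightarrow> nat \<lfloor>y\<rfloor> < n"
  by linarith

lemma K_closed: "closed K" unfolding K_def by simp

lemma emeasure_fin: "A \<in> sets borel \<Longrightarrow> A \<subseteq> K \<Longrightarrow> emeasure M A = ennreal (measure M A)"
proof -
  assume "A \<in> sets borel" "A \<subseteq> K"
  then have "emeasure M A \<le> emeasure M K" using Mb by (intro emeasure_mono) auto
  then have "emeasure M A \<noteq> \<infinity>" using K_fin by (auto simp: top_unique)
  then show ?thesis using emeasure_eq_ennreal_measure[of M A] by auto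
qed

lemma LA: assumes t0: "0 \<le> t" and tm: "t \<le> m"
  shows "emeasure M {x\<in>K. F x < t} = ennreal t"
proof -
  define S where "S = {x\<in>K. t \<le> F x}"
  have rS: "r \<in> S" unfolding S_def K_def using lr F_high[of r] tm by auto
  have "closed {x. t \<le> F x}"
    using F_cont by (intro closed_Collect_le continuous_at_imp_continuous_on) auto
  then have clS: "closed S" unfolding S_def using K_closed
    by (simp add: Collect_conj_eq closed_Int Int_commute Collect_mem_eq)
  have bdS: "bdd_below S" unfolding S_def K_def by (rule bdd_belowI[of _ l]) auto
  define q where "q = Inf S"
  have qS: "q \<in> S" unfolding q_def using rS clS bdS closed_contains_Inf by blast
  have qK: "q \<in> K" using qS S_def by auto
  have tq: "t \<le> F q" using qS S_def by auto
  have lowS: "q \<le> y" if "y \<in> S" for y unfolding q_def using that bdS by (rule cInf_lower)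
  have seteq: "{x\<in>K. F x < t} = {l..<q}"
  proof (intro set_eqI iffI)
    fix x assume x: "x \<in> {x\<in>K. F x < t}"
    have "\<not> q \<le> x"
    proof
      assume "q \<le> x" then have "F q \<le> F x" by (rule F_mono)
      then show False using x tq by auto
    qed
    then show "x \<in> {l..<q}" using x K_def by auto
  next
    fix x assume x: "x \<in> {l..<q}"
    then have xK: "x \<in> K" using qK K_def by auto
    have "x \<notin> S" using lowS x by force
    then show "x \<in> {x\<in>K. F x < t}" using xK S_def by auto
  qed
  have Fq: "F q = t"
  proof (rule ccontr)
    assume "F q \<noteq> t"
    then have gt: "F q > t" using tq by simp
    show False
    proof (cases "q = l")
      case True then show False using gt F_l t0 by simp
    next
      case False
      then have ql: "l < q" using qK K_def by auto
      have "F \<midarrow>q\<rightarrow> F q" using F_cont[of q] by (simp add: isCont_def)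
      then obtain d where d: "d > 0" "\<And>y. y \<noteq> q \<Longrightarrow> norm (y - q) < d \<Longrightarrow> norm (F y - F q) < F q - t"
        using gt unfolding LIM_eq by (metis diff_gt_0_iff_gt)
      define y where "y = max l (q - d/2)"
      have y1: "y < q" "l \<le> y" using ql d by (auto simp: y_def)
      have "norm (y - q) < d" using y1 d by (auto simp: y_def)
      then have "norm (F y - F q) < F q - t" using d y1 by auto
      then have "F y > t" by auto
      moreover have "y \<in> {x\<in>K. F x < t}" using seteq y1 by auto
      ultimately show False by auto
    qed
  qed
  have lq: "{..q} \<inter> K = {l..q}" using qK K_def by auto
  have e1: "emeasure M {l..q} = ennreal t"
    using emeasure_fin[of "{l..q}"] Fq qK unfolding F_eq lq by (simp add: K_def)
  have "{l..q} = {l..<q} \<union> {q}" using qK K_def by auto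
  then have "emeasure M {l..q} = emeasure M {l..<q} + emeasure M {q}"
    using Mb by (simp add: plus_emeasure)
  then show ?thesis using e1 na[of q] seteq by simp
qed

definition "Ks = {x\<in>K. F x < m}"
definition "idx k x = nat \<lfloor>F x * 2^k / m\<rfloor>"
definition "D k j = {x\<in>Ks. idx k x = j}"

lemma Ks_sub: "Ks \<subseteq> K" unfolding Ks_def by auto

lemma Ks_meas[measurable]: "Ks \<in> sets borel"
  unfolding Ks_def by measurable

lemma emeasure_Ks: "emeasure M Ks = ennreal m"
  unfolding Ks_def using LA[of m] m_pos by simp

lemma null_K_Ks: "emeasure M (K - Ks) = 0"
proof -
  have "emeasure M (K - Ks) = emeasure M K - emeasure M Ks"
    using Mb Ks_sub emeasure_Ks by (intro emeasure_Diff) auto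
  then show ?thesis using emeasure_Ks emeasure_K by simp
qed

lemma idx_meas[measurable]: "idx k \<in> measurable borel (count_space UNIV)"
  unfolding idx_def by measurable

lemma D_meas[measurable]: "D k j \<in> sets borel"
proof -
  have "D k j = Ks \<inter> idx k -` {j}" unfolding D_def by auto
  then show ?thesis using measurable_sets[OF idx_meas, of "{j}" k] Ks_meas by auto
qed

lemma idx_mono: "x \<le> y \<Longrightarrow> idx k x \<le> idx k y"
  unfolding idx_def using F_mono[of x y] m_pos
  by (intro nat_mono floor_mono divide_right_mono mult_right_mono) auto

lemma idx_lt: "x \<in> Ks \<Longrightarrow> idx k x < 2^k"
proof -
  assume "x \<in> Ks"
  then have "F x < m" unfolding Ks_def by auto
  then have "F x * 2^k / m < 2^k" using m_pos by (simp add: field_simps)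
  then show ?thesis unfolding idx_def using F_nonneg[of x] m_pos
    by (intro nat_floor_lt) auto
qed

lemma D_sub_K: "D k j \<subseteq> K" unfolding D_def using Ks_sub by auto
lemma D_sub_Ks: "D k j \<subseteq> Ks" unfolding D_def by auto

lemma mem_D: "x \<in> Ks \<Longrightarrow> x \<in> D k (idx k x)" unfolding D_def by auto

lemma D_disj: "j \<noteq> j' \<Longrightarrow> D k j \<inter> D k j' = {}" unfolding D_def by auto

lemma D_mem_idx: "x \<in> D k j \<Longrightarrow> idx k x = j" unfolding D_def by auto

lemma D_interval: "is_interval (D k j)"
  unfolding is_interval_1
proof (intro ballI allI impI)
  fix a b x assume a: "a \<in> D k j" and b: "b \<in> D k j" and x: "a \<le> x \<and> x \<le> b"
  have aK: "a \<in> K" "b \<in> K" using a b D_sub_K by auto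
  then have xK: "x \<in> K" using x unfolding K_def by auto
  have "F x \<le> F b" using x by (intro F_mono) auto
  moreover have "F b < m" using b D_sub_Ks unfolding Ks_def by auto
  ultimately have Fx: "F x < m" by simp
  have i1: "idx k a \<le> idx k x" "idx k x \<le> idx k b" using idx_mono x by auto
  have i2: "idx k a = j" "idx k b = j" using D_mem_idx a b by auto
  have "idx k x = j" using i1 i2 by simp
  then show "x \<in> D k j" unfolding D_def Ks_def using xK Fx by simp
qed

lemma D_eq: assumes "j < 2^k"
  shows "D k j = {x\<in>K. F x < (real j + 1) * (m / 2^k)} - {x\<in>K. F x < real j * (m / 2^k)}"
proof -
  have c: "0 < m / 2^k" using m_pos by simp
  have jm: "(real j + 1) * (m / 2^k) \<le> m"
  proof -
    have "j + 1 \<le> (2::nat)^k" using assms by simp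
    then have "real (j + 1) \<le> real ((2::nat)^k)" by (rule of_nat_mono)
    then have "real j + 1 \<le> 2^k" by simp
    then have "(real j + 1) * (m / 2^k) \<le> 2^k * (m / 2^k)" using c by (intro mult_right_mono) auto
    then show ?thesis by simp
  qed
  have key: "idx k x = j \<longleftrightarrow> real j * (m / 2^k) \<le> F x \<and> F x < (real j + 1) * (m / 2^k)" for x
  proof -
    have "idx k x = j \<longleftrightarrow> real j \<le> F x * 2^k / m \<and> F x * 2^k / m < real j + 1"
      unfolding idx_def using F_nonneg[of x] m_pos by (intro nat_floor_eq) auto
    also have "\<dots> \<longleftrightarrow> real j * (m / 2^k) \<le> F x \<and> F x < (real j + 1) * (m / 2^k)"
      using m_pos by (simp add: field_simps)
    finally show ?thesis .
  qed
  show ?thesis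
  proof (intro set_eqI)
    fix x
    have "x \<in> D k j \<longleftrightarrow> x \<in> K \<and> F x < m \<and> idx k x = j" unfolding D_def Ks_def by simp
    also have "\<dots> \<longleftrightarrow> x \<in> K \<and> F x < m \<and> real j * (m / 2^k) \<le> F x \<and> F x < (real j + 1) * (m / 2^k)"
      using key[of x] by simp
    also have "\<dots> \<longleftrightarrow> x \<in> K \<and> real j * (m / 2^k) \<le> F x \<and> F x < (real j + 1) * (m / 2^k)"
      using jm by auto
    finally show "x \<in> D k j \<longleftrightarrow> x \<in> {x\<in>K. F x < (real j + 1) * (m / 2^k)} - {x\<in>K. F x < real j * (m / 2^k)}"
      by auto
  qed
qed

lemma emeasure_D: assumes "j < 2^k" shows "emeasure M (D k j) = ennreal (m / 2^k)"
proof -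
  define c where "c = m / 2^k"
  have c: "0 < c" using m_pos by (simp add: c_def)
  have jm: "(real j + 1) * c \<le> m"
  proof -
    have "j + 1 \<le> (2::nat)^k" using assms by simp
    then have "real (j + 1) \<le> real ((2::nat)^k)" by (rule of_nat_mono)
    then have "real j + 1 \<le> 2^k" by simp
    then have "(real j + 1) * c \<le> 2^k * c" using c by (intro mult_right_mono) auto
    then show ?thesis by (simp add: c_def)
  qed
  have a0: "0 \<le> real j * c" using c by simp
  have a1: "real j * c \<le> (real j + 1) * c" using c by (simp add: algebra_simps)
  have sub: "{x\<in>K. F x < real j * c} \<subseteq> {x\<in>K. F x < (real j + 1) * c}" using a1 by auto
  have L1: "emeasure M {x\<in>K. F x < real j * c} = ennreal (real j * c)"
    using a0 a1 jm by (intro LA) auto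
  have L2: "emeasure M {x\<in>K. F x < (real j + 1) * c} = ennreal ((real j + 1) * c)"
    using a0 a1 jm by (intro LA) auto
  have "emeasure M (D k j) = emeasure M {x\<in>K. F x < (real j + 1) * c} - emeasure M {x\<in>K. F x < real j * c}"
    unfolding D_eq[OF assms] c_def[symmetric] using Mb L1 sub
    by (intro emeasure_Diff) auto
  also have "\<dots> = ennreal ((real j + 1) * c) - ennreal (real j * c)" using L1 L2 by simp
  also have "\<dots> = ennreal c"
    using c a0 by (subst ennreal_minus) (auto simp: algebra_simps)
  finally show ?thesis by (simp add: c_def)
qed

lemma floor_half: "0 \<le> (y::real) \<Longrightarrow> nat \<lfloor>2 * y\<rfloor> div 2 = nat \<lfloor>y\<rfloor>"
  by linarith

lemma idx_Suc: "idx k x = idx (Suc k) x div 2"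
proof -
  have e: "F x * 2 ^ Suc k / m = 2 * (F x * 2^k / m)" by simp
  have "0 \<le> F x * 2^k / m" using F_nonneg[of x] m_pos by simp
  then show ?thesis unfolding idx_def e using floor_half[of "F x * 2^k / m"] by simp
qed

lemma idx_le: "i \<le> k \<Longrightarrow> idx i x = idx k x div 2^(k-i)"
proof (induction k)
  case 0 then show ?case by simp
next
  case (Suc k)
  show ?case
  proof (cases "i = Suc k")
    case True then show ?thesis by simp
  next
    case False
    then have "i \<le> k" using Suc by simp
    then have "idx i x = idx k x div 2^(k-i)" using Suc by simp
    also have "\<dots> = idx (Suc k) x div 2 div 2^(k-i)" by (simp only: idx_Suc[of k x])
    also have "\<dots> = idx (Suc k) x div (2 * 2^(k-i))" by (simp only: div_mult2_eq)
    also have "\<dots> = idx (Suc k) x div 2^(Suc k - i)" using \<open>i \<le> k\<close> by (simp add: Suc_diff_le)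
    finally show ?thesis .
  qed
qed

lemma D_mono: "i \<le> k \<Longrightarrow> D k j \<subseteq> D i (j div 2^(k-i))"
proof
  fix x assume "i \<le> k" "x \<in> D k j"
  then show "x \<in> D i (j div 2^(k-i))" unfolding D_def using idx_le[of i k x] by simp
qed

end

context RH begin

lemma bmM: "borel_measurable M = borel_measurable borel"
  by (rule measurable_cong_sets[OF Mb refl])

lemma meas_M: "f \<in> borel_measurable borel \<Longrightarrow> f \<in> borel_measurable M"
  by (simp only: bmM)

lemma Pset_meas: "{x. P (idx k x)} \<in> sets borel"
proof -
  have e: "{x. P (idx k x)} = idx k -` {j. P j} \<inter> space borel" by (simp add: vimage_def)
  have "idx k -` {j. P j} \<inter> space borel \<in> sets borel"
    by (rule measurable_sets[OF idx_meas[of k]]) simp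
  then show ?thesis by (simp only: e)
qed

lemma SL:
  fixes P :: "nat \<Rightarrow> nat \<Rightarrow> bool" and h :: "real \<Rightarrow> ennreal"
  assumes h: "h \<in> borel_measurable borel"
  shows "(\<integral>\<^sup>+x. h x * indicator {x\<in>Ks. \<exists>k. P k (idx k x)} x \<partial>M)
     = (\<Sum>k. \<Sum>j\<in>{j. j < 2^k \<and> P k j \<and> (\<forall>i<k. \<not> P i (j div 2^(k-i)))}. \<integral>\<^sup>+x. h x * indicator (D k j) x \<partial>M)"
proof -
  define T where "T = (\<lambda>k. {j. j < 2^k \<and> P k j \<and> (\<forall>i<k. \<not> P i (j div 2^(k-i)))})"
  define U where "U = {x\<in>Ks. \<exists>k. P k (idx k x)}"
  have finT: "finite (T k)" for k unfolding T_def by auto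
  have pw: "h x * indicator U x = (\<Sum>k. \<Sum>j\<in>T k. h x * indicator (D k j) x)" for x
  proof (cases "x \<in> Ks")
    case False
    then have "x \<notin> U" "\<And>k j. x \<notin> D k j" unfolding U_def using D_sub_Ks by auto
    then show ?thesis by simp
  next
    case True
    have ind: "(\<Sum>j\<in>T k. h x * indicator (D k j) x) = (if idx k x \<in> T k then h x else 0)" for k
    proof -
      have "(\<Sum>j\<in>T k. h x * indicator (D k j) x) = (\<Sum>j\<in>T k. if j = idx k x then h x else 0)"
      proof (intro sum.cong refl)
        fix j
        have "x \<in> D k j \<longleftrightarrow> j = idx k x" using True unfolding D_def by auto
        then show "h x * indicator (D k j) x = (if j = idx k x then h x else 0)"
          by (simp add: indicator_def)
      qed
      also have "\<dots> = (if idx k x \<in> T k then h x else 0)"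
        using finT[of k] by (simp add: sum.delta')
      finally show ?thesis .
    qed
    have Tiff: "idx k x \<in> T k \<longleftrightarrow> P k (idx k x) \<and> (\<forall>i<k. \<not> P i (idx i x))" for k
    proof -
      have e: "idx k x div 2^(k-i) = idx i x" if "i < k" for i using idx_le[of i k x] that by simp
      show ?thesis unfolding T_def using idx_lt[OF True, of k] e by simp
    qed
    show ?thesis
    proof (cases "\<exists>k. P k (idx k x)")
      case False
      then have "x \<notin> U" unfolding U_def by auto
      moreover have "idx k x \<notin> T k" for k using Tiff False by auto
      ultimately show ?thesis using ind by simp
    next
      case ex: True
      define k0 where "k0 = (LEAST k. P k (idx k x))"
      have k0: "P k0 (idx k0 x)" unfolding k0_def using ex by (rule LeastI_ex)
      have k0min: "\<not> P i (idx i x)" if "i < k0" for i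
        using that not_less_Least unfolding k0_def by blast
      have iff: "idx k x \<in> T k \<longleftrightarrow> k = k0" for k
      proof
        assume "idx k x \<in> T k"
        then have a: "P k (idx k x)" "\<forall>i<k. \<not> P i (idx i x)" using Tiff by auto
        have "k0 \<le> k" unfolding k0_def using a(1) by (rule Least_le)
        moreover have "\<not> k0 < k" using a(2) k0 by auto
        ultimately show "k = k0" by simp
      next
        assume "k = k0" then show "idx k x \<in> T k" using Tiff k0 k0min by auto
      qed
      have "(\<Sum>k. \<Sum>j\<in>T k. h x * indicator (D k j) x) = (\<Sum>k. if k = k0 then h x else 0)"
        using ind iff by simp
      also have "\<dots> = (\<Sum>k\<in>{k0}. if k = k0 then h x else 0)"
        by (intro suminf_finite) auto
      also have "\<dots> = h x" by simp
      finally show ?thesis using True ex unfolding U_def by simp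
    qed
  qed
  have "(\<integral>\<^sup>+x. h x * indicator U x \<partial>M) = (\<integral>\<^sup>+x. (\<Sum>k. \<Sum>j\<in>T k. h x * indicator (D k j) x) \<partial>M)"
    using pw by simp
  also have "\<dots> = (\<Sum>k. \<integral>\<^sup>+x. (\<Sum>j\<in>T k. h x * indicator (D k j) x) \<partial>M)"
    using h by (intro nn_integral_suminf) (auto intro!: meas_M borel_measurable_sum)
  also have "\<dots> = (\<Sum>k. \<Sum>j\<in>T k. \<integral>\<^sup>+x. h x * indicator (D k j) x \<partial>M)"
    using h by (subst nn_integral_sum) (auto intro!: meas_M)
  finally show ?thesis unfolding U_def T_def .
qed

lemma U_meas: "{x\<in>Ks. \<exists>k. P k (idx k x)} \<in> sets borel"
proof -
  have "{x\<in>Ks. \<exists>k. P k (idx k x)} = Ks \<inter> (\<Union>k. {x. P k (idx k x)})" by auto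
  then show ?thesis using Pset_meas by auto
qed

lemma SL_le:
  fixes P :: "nat \<Rightarrow> nat \<Rightarrow> bool" and h q :: "real \<Rightarrow> ennreal"
  assumes h: "h \<in> borel_measurable borel" and q: "q \<in> borel_measurable borel"
  assumes le: "\<And>k j. j < 2^k \<Longrightarrow> P k j \<Longrightarrow> (\<forall>i<k. \<not> P i (j div 2^(k-i))) \<Longrightarrow>
      (\<integral>\<^sup>+x. h x * indicator (D k j) x \<partial>M) \<le> (\<integral>\<^sup>+x. q x * indicator (D k j) x \<partial>M)"
  shows "(\<integral>\<^sup>+x. h x * indicator {x\<in>Ks. \<exists>k. P k (idx k x)} x \<partial>M)
      \<le> (\<integral>\<^sup>+x. q x * indicator {x\<in>Ks. \<exists>k. P k (idx k x)} x \<partial>M)"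
  unfolding SL[OF h] SL[OF q]
  by (intro suminf_le sum_mono summableI) (use le in auto)

end

lemma div_le_imp: "b \<noteq> 0 \<Longrightarrow> b \<noteq> top \<Longrightarrow> a / b \<le> c \<Longrightarrow> a \<le> c * (b::ennreal)"
proof -
  assume b: "b \<noteq> 0" "b \<noteq> top" and le: "a / b \<le> c"
  have "b / b = 1" using b by (simp add: less_top)
  then have "a = a / b * b" by (simp add: ennreal_divide_times)
  also have "\<dots> \<le> c * b" using le by (intro mult_right_mono) auto
  finally show ?thesis .
qed

context RH begin

definition "wint A = (\<integral>\<^sup>+x. ennreal (w x) * indicator A x \<partial>M)"
definition "avg k j = wint (D k j) / ennreal (m / 2^k)"
definition "g x = (SUP k. avg k (idx k x))"

lemma wm_borel: "w \<in> borel_measurable borel" using wm by (simp only: bmM)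

lemma g_meas: "g \<in> borel_measurable borel"
proof -
  have "(\<lambda>x. avg k (idx k x)) \<in> borel_measurable borel" for k
  proof -
    have "(\<lambda>j. avg k j) \<in> measurable (count_space UNIV) borel" by simp
    then show ?thesis using measurable_compose[OF idx_meas[of k]] by blast
  qed
  then show ?thesis unfolding g_def by (intro borel_measurable_SUP) auto
qed

lemma D_avg_int: assumes "j < 2^k" shows "D k j \<in> avg_intervals M"
  unfolding avg_intervals_def using emeasure_D[OF assms] D_interval m_pos by simp

lemma wint_D_cong: assumes "D k j \<subseteq> J"
  shows "(\<integral>\<^sup>+ y\<in>D k j. ennreal \<bar>w y * indicator J y\<bar> \<partial>M) = wint (D k j)"
  unfolding wint_def
proof (intro nn_integral_cong)
  fix y
  show "ennreal \<bar>w y * indicator J y\<bar> * indicator (D k j) y = ennreal (w y) * indicator (D k j) y"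
  proof (cases "y \<in> D k j")
    case True then have "y \<in> J" using assms by auto
    then show ?thesis using True wnn[of y] by simp
  next
    case False then show ?thesis by simp
  qed
qed

lemma avg_maxfun: assumes "j < 2^k" "x \<in> D k j" "D k j \<subseteq> J"
  shows "avg k j \<le> maxfun M (\<lambda>y. w y * indicator J y) x"
  unfolding maxfun_def
proof (rule SUP_upper2[of "D k j"])
  show "D k j \<in> {J \<in> avg_intervals M. x \<in> J}" using D_avg_int[OF assms(1)] assms(2) by simp
  show "avg k j \<le> (\<integral>\<^sup>+ y\<in>D k j. ennreal \<bar>w y * indicator J y\<bar> \<partial>M) / emeasure M (D k j)"
    unfolding wint_D_cong[OF assms(3)] emeasure_D[OF assms(1)] avg_def by simp
qed

lemma g_le_maxfun_K: "x \<in> Ks \<Longrightarrow> g x \<le> maxfun M (\<lambda>y. w y * indicator K y) x"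
  unfolding g_def
proof (rule SUP_least)
  fix k assume x: "x \<in> Ks"
  show "avg k (idx k x) \<le> maxfun M (\<lambda>y. w y * indicator K y) x"
    using idx_lt[OF x] mem_D[OF x] D_sub_K by (intro avg_maxfun) auto
qed

lemma FW_bound:
  assumes J: "is_interval J" and p: "0 < wint J" and f: "wint J < \<infinity>"
  shows "(\<integral>\<^sup>+x\<in>J. maxfun M (\<lambda>y. w y * indicator J y) x \<partial>M) \<le> FW_Ainf M w * wint J"
proof -
  have wm: "wmeas M w J = wint J" unfolding wmeas_def wint_def by simp
  have "(\<integral>\<^sup>+x\<in>J. maxfun M (\<lambda>y. w y * indicator J y) x \<partial>M) / wint J \<le> FW_Ainf M w"
    unfolding FW_Ainf_def wm[symmetric]
    by (rule SUP_upper) (use J p f wm in auto)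
  then show ?thesis using p f by (intro div_le_imp) auto
qed

end

context RH begin

lemma wint_mono: "A \<subseteq> B \<Longrightarrow> wint A \<le> wint B"
  unfolding wint_def by (intro nn_integral_mono mult_left_mono) (auto simp: indicator_def)

lemma wint_cmult: "A \<in> sets borel \<Longrightarrow> (\<integral>\<^sup>+x. c * indicator A x \<partial>M) = c * emeasure M A"
  using Mb by (intro nn_integral_cmult_indicator) auto

lemma wint_Ks: "wint Ks = wint K"
  unfolding wint_def
proof (intro nn_integral_cong_AE)
  have "K - Ks \<in> null_sets M" using null_K_Ks Mb by (auto simp: null_sets_def)
  then show "AE x in M. ennreal (w x) * indicator Ks x = ennreal (w x) * indicator K x"
    by (rule AE_I') (use Ks_sub in \<open>auto simp: indicator_def\<close>)
qed

lemma idx0: "x \<in> Ks \<Longrightarrow> idx 0 x = 0" using idx_lt[of x 0] by simp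

lemma D00: "D 0 0 = Ks" unfolding D_def using idx0 by auto

lemma avg00: "avg 0 0 = wint K / ennreal m" unfolding avg_def D00 wint_Ks by simp

lemma avg_le_imp: assumes "avg k j \<le> ennreal lam" "0 \<le> lam"
  shows "wint (D k j) \<le> ennreal (lam * (m / 2^k))"
proof -
  have "0 < m / 2^k" using m_pos by simp
  then have "wint (D k j) \<le> ennreal lam * ennreal (m / 2^k)"
    using assms(1) unfolding avg_def by (intro div_le_imp) auto
  then show ?thesis using ennreal_mult[of lam "m/2^k"] assms(2) m_pos by simp
qed

lemma avg_pos_imp: assumes "ennreal lam < avg k j" "0 \<le> lam" shows "0 < wint (D k j)"
proof (rule ccontr)
  assume "\<not> 0 < wint (D k j)"
  then have "wint (D k j) = 0" by simp
  then show False using assms unfolding avg_def by simp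
qed

lemma wint_fin: "wint K < \<infinity> \<Longrightarrow> wint (D k j) < \<infinity>"
  using wint_mono[OF D_sub_K[of k j]] by (auto simp: top_unique)

text \<open>Stopping intervals for level lam: the parent has average at most lam.\<close>
lemma stop_parent:
  assumes a: "avg 0 0 \<le> ennreal lam" and lam: "0 \<le> lam"
    and j: "j < 2^k" and nP: "\<forall>i<k. \<not> ennreal lam < avg i (j div 2^(k-i))"
  shows "wint (D k j) \<le> ennreal (2 * lam) * emeasure M (D k j)"
proof (cases k)
  case 0
  then have "j = 0" using j by simp
  have "wint (D 0 0) \<le> ennreal (lam * (m / 2^0))" by (rule avg_le_imp[OF a lam])
  also have "\<dots> \<le> ennreal ((2 * lam) * (m / 2^0))" using lam m_pos by (intro ennreal_leI) simp
  also have "ennreal ((2 * lam) * (m / 2^0)) = ennreal (2 * lam) * emeasure M (D 0 0)"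
    unfolding emeasure_D[of 0 0, simplified] using lam m_pos by (simp add: ennreal_mult)
  finally show ?thesis using \<open>j = 0\<close> 0 by simp
next
  case (Suc k')
  have p: "avg k' (j div 2) \<le> ennreal lam" using nP Suc by (auto simp: not_less)
  have "wint (D k j) \<le> wint (D k' (j div 2))"
    using D_mono[of k' k j] Suc by (intro wint_mono) simp
  also have "\<dots> \<le> ennreal (lam * (m / 2^k'))" using avg_le_imp[OF p lam] .
  also have "lam * (m / 2^k') = (2 * lam) * (m / 2^k)" using Suc by simp
  also have "ennreal ((2 * lam) * (m / 2^k)) = ennreal (2 * lam) * emeasure M (D k j)"
    unfolding emeasure_D[OF j] using lam m_pos by (intro ennreal_mult) auto
  finally show ?thesis .
qed

lemma E_eq: "{x\<in>Ks. \<exists>k. ennreal lam < avg k (idx k x)} = {x\<in>Ks. ennreal lam < g x}"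
  unfolding g_def by (simp add: less_SUP_iff)

lemma CZ1: assumes a: "avg 0 0 \<le> ennreal lam" and lam: "0 \<le> lam"
  shows "(\<integral>\<^sup>+x. ennreal (w x) * indicator {x\<in>Ks. ennreal lam < g x} x \<partial>M)
     \<le> (\<integral>\<^sup>+x. ennreal (2*lam) * indicator {x\<in>Ks. ennreal lam < g x} x \<partial>M)"
  unfolding E_eq[symmetric]
proof (rule SL_le)
  show "(\<lambda>x. ennreal (w x)) \<in> borel_measurable borel" using wm_borel by simp
  show "(\<lambda>x. ennreal (2 * lam)) \<in> borel_measurable borel" by simp
  fix k j assume j: "j < 2^k" and nP: "\<forall>i<k. \<not> ennreal lam < avg i (j div 2^(k-i))"
  have "(\<integral>\<^sup>+x. ennreal (w x) * indicator (D k j) x \<partial>M) = wint (D k j)" unfolding wint_def ..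
  also have "\<dots> \<le> ennreal (2 * lam) * emeasure M (D k j)" by (rule stop_parent[OF a lam j nP])
  also have "\<dots> = (\<integral>\<^sup>+x. ennreal (2 * lam) * indicator (D k j) x \<partial>M)"
    by (rule wint_cmult[symmetric]) simp
  finally show "(\<integral>\<^sup>+x. ennreal (w x) * indicator (D k j) x \<partial>M) \<le> (\<integral>\<^sup>+x. ennreal (2 * lam) * indicator (D k j) x \<partial>M)" .
qed

lemma g_le_stop:
  assumes j: "j < 2^k" and P: "ennreal lam < avg k j"
    and nP: "\<forall>i<k. \<not> ennreal lam < avg i (j div 2^(k-i))" and x: "x \<in> D k j"
  shows "g x \<le> maxfun M (\<lambda>y. w y * indicator (D k j) y) x"
  unfolding g_def
proof (rule SUP_least)
  fix i
  have xK: "x \<in> Ks" and ix: "idx k x = j" using x D_sub_Ks D_mem_idx by auto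
  have top: "avg k j \<le> maxfun M (\<lambda>y. w y * indicator (D k j) y) x"
    using j x by (intro avg_maxfun) auto
  show "avg i (idx i x) \<le> maxfun M (\<lambda>y. w y * indicator (D k j) y) x"
  proof (cases "i < k")
    case True
    then have "idx i x = j div 2^(k-i)" using idx_le[of i k x] ix by simp
    then have "avg i (idx i x) \<le> ennreal lam" using nP True by (simp add: not_less)
    also have "\<dots> \<le> avg k j" using P by simp
    finally show ?thesis using top by simp
  next
    case False
    then have ki: "k \<le> i" by simp
    have "idx k x = idx i x div 2^(i-k)" using idx_le[OF ki] .
    then have "D i (idx i x) \<subseteq> D k j" using D_mono[OF ki, of "idx i x"] ix by simp
    then show ?thesis using idx_lt[OF xK, of i] mem_D[OF xK, of i] by (intro avg_maxfun) auto
  qed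
qed

lemma CZ2: assumes a: "avg 0 0 \<le> ennreal lam" and lam: "0 \<le> lam" and Wf: "wint K < \<infinity>"
  shows "(\<integral>\<^sup>+x. g x * indicator {x\<in>Ks. ennreal lam < g x} x \<partial>M)
     \<le> (\<integral>\<^sup>+x. (FW_Ainf M w * ennreal (2*lam)) * indicator {x\<in>Ks. ennreal lam < g x} x \<partial>M)"
  unfolding E_eq[symmetric]
proof (rule SL_le)
  show "g \<in> borel_measurable borel" by (rule g_meas)
  show "(\<lambda>x. FW_Ainf M w * ennreal (2 * lam)) \<in> borel_measurable borel" by simp
  fix k j assume j: "j < 2^k" and P: "ennreal lam < avg k j" and nP: "\<forall>i<k. \<not> ennreal lam < avg i (j div 2^(k-i))"
  let ?J = "D k j"
  have "(\<integral>\<^sup>+x. g x * indicator ?J x \<partial>M) \<le> (\<integral>\<^sup>+x. maxfun M (\<lambda>y. w y * indicator ?J y) x * indicator ?J x \<partial>M)"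
  proof (intro nn_integral_mono)
    fix x
    show "g x * indicator ?J x \<le> maxfun M (\<lambda>y. w y * indicator ?J y) x * indicator ?J x"
    proof (cases "x \<in> ?J")
      case True then show ?thesis using g_le_stop[OF j P nP True] by simp
    qed simp
  qed
  also have "\<dots> \<le> FW_Ainf M w * wint ?J"
    using FW_bound[OF D_interval avg_pos_imp[OF P lam] wint_fin[OF Wf]] by simp
  also have "\<dots> \<le> FW_Ainf M w * (ennreal (2 * lam) * emeasure M ?J)"
    by (intro mult_left_mono stop_parent[OF a lam j nP]) simp
  also have "\<dots> = (\<integral>\<^sup>+x. (FW_Ainf M w * ennreal (2 * lam)) * indicator ?J x \<partial>M)"
    by (subst wint_cmult) (simp_all add: mult.assoc)
  finally show "(\<integral>\<^sup>+x. g x * indicator ?J x \<partial>M) \<le> (\<integral>\<^sup>+x. (FW_Ainf M w * ennreal (2 * lam)) * indicator ?J x \<partial>M)" .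
qed

end

context RH begin

lemma MK_single: "emeasure MK {p} = 0"
proof -
  have "emeasure M ({p} \<inter> K) \<le> emeasure M {p}" using Mb by (intro emeasure_mono) auto
  then show ?thesis using na[of p] emeasure_MK[of "{p}"] by simp
qed

lemma MK_Ioc: "p \<le> q \<Longrightarrow> emeasure MK {p<..q} = ennreal (F q - F p)"
proof -
  assume pq: "p \<le> q"
  have "emeasure MK {p<..q} = emeasure M ({p<..q} \<inter> K)" by (rule emeasure_MK) simp
  also have "\<dots> = ennreal (measure M ({p<..q} \<inter> K))" by (rule emeasure_fin) auto
  also have "\<dots> = ennreal (F q - F p)" using F_diff[OF pq] by simp
  finally show ?thesis .
qed

lemma MK_Icc: "p \<le> q \<Longrightarrow> emeasure MK {p..q} = ennreal (F q - F p)"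
proof -
  assume pq: "p \<le> q"
  have "{p..q} = {p} \<union> {p<..q}" using pq by auto
  then have "emeasure MK {p..q} = emeasure MK {p} + emeasure MK {p<..q}"
    by (simp add: plus_emeasure)
  then show ?thesis using MK_single MK_Ioc[OF pq] by simp
qed

lemma R_null: "emeasure MK {x. x < q \<and> F x = F q} = 0"
proof -
  define R where "R = {x. x < q \<and> F x = F q}"
  have "emeasure MK R = emeasure M (R \<inter> K)"
    unfolding R_def by (intro emeasure_MK) measurable
  also have "\<dots> = 0"
  proof (cases "R \<inter> K = {}")
    case True then show ?thesis by simp
  next
    case False
    have bd: "bdd_below (R \<inter> K)" unfolding K_def by (rule bdd_belowI[of _ l]) auto
    define p where "p = Inf (R \<inter> K)"
    have sub: "R \<inter> K \<subseteq> {p..q}"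
    proof
      fix x assume x: "x \<in> R \<inter> K"
      then have "p \<le> x" unfolding p_def using bd by (intro cInf_lower) auto
      then show "x \<in> {p..q}" using x R_def by auto
    qed
    obtain x0 where x0: "x0 \<in> R \<inter> K" using False by auto
    have pq: "p \<le> q" using sub x0 by force
    have Fp: "F p = F q"
    proof (rule ccontr)
      assume "F p \<noteq> F q"
      then have lt: "F p < F q" using F_mono[OF pq] by simp
      have "F \<midarrow>p\<rightarrow> F p" using F_cont[of p] by (simp add: isCont_def)
      then obtain d where d: "d > 0" "\<And>y. y \<noteq> p \<Longrightarrow> norm (y - p) < d \<Longrightarrow> norm (F y - F p) < F q - F p"
        using lt unfolding LIM_eq by (metis diff_gt_0_iff_gt)
      have "Inf (R \<inter> K) < p + d" using d p_def by simp
      then obtain x where x: "x \<in> R \<inter> K" "x < p + d" using False by (auto simp: cInf_less_iff[OF False bd])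
      have px: "p \<le> x" using sub x by auto
      have Fx: "F x = F q" using x R_def by auto
      show False
      proof (cases "x = p")
        case True then show False using Fx lt by simp
      next
        case False
        then have "norm (F x - F p) < F q - F p" using d px x by auto
        then show False using Fx by simp
      qed
    qed
    have "emeasure M (R \<inter> K) \<le> emeasure M ({p..q} \<inter> K)"
      using sub Mb by (intro emeasure_mono) auto
    also have "\<dots> = emeasure MK {p..q}" by (rule emeasure_MK[symmetric]) simp
    also have "\<dots> = 0" using MK_Icc[OF pq] Fp by simp
    finally show ?thesis by simp
  qed
  finally show ?thesis unfolding R_def .
qed

lemma L_null: "emeasure MK {x. q < x \<and> F x = F q} = 0"
proof -
  define R where "R = {x. q < x \<and> F x = F q}"
  have "emeasure MK R = emeasure M (R \<inter> K)"
    unfolding R_def by (intro emeasure_MK) measurable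
  also have "\<dots> = 0"
  proof (cases "R \<inter> K = {}")
    case True then show ?thesis by simp
  next
    case False
    have bd: "bdd_above (R \<inter> K)" unfolding K_def by (rule bdd_aboveI[of _ r]) auto
    define p where "p = Sup (R \<inter> K)"
    have sub: "R \<inter> K \<subseteq> {q<..p}"
    proof
      fix x assume x: "x \<in> R \<inter> K"
      then have "x \<le> p" unfolding p_def using bd by (intro cSup_upper) auto
      then show "x \<in> {q<..p}" using x R_def by auto
    qed
    obtain x0 where x0: "x0 \<in> R \<inter> K" using False by auto
    have pq: "q \<le> p" using sub x0 by force
    have Fp: "F p = F q"
    proof (rule ccontr)
      assume "F p \<noteq> F q"
      then have lt: "F q < F p" using F_mono[OF pq] by simp
      have "F \<midarrow>p\<rightarrow> F p" using F_cont[of p] by (simp add: isCont_def)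
      then obtain d where d: "d > 0" "\<And>y. y \<noteq> p \<Longrightarrow> norm (y - p) < d \<Longrightarrow> norm (F y - F p) < F p - F q"
        using lt unfolding LIM_eq by (metis diff_gt_0_iff_gt)
      have "p - d < Sup (R \<inter> K)" using d p_def by simp
      then obtain x where x: "x \<in> R \<inter> K" "p - d < x" using False by (auto simp: less_cSup_iff[OF False bd])
      have px: "x \<le> p" using sub x by auto
      have Fx: "F x = F q" using x R_def by auto
      show False
      proof (cases "x = p")
        case True then show False using Fx lt by simp
      next
        case False
        then have "norm (F x - F p) < F p - F q" using d px x by auto
        then show False using Fx by simp
      qed
    qed
    have "emeasure M (R \<inter> K) \<le> emeasure M ({q<..p} \<inter> K)"
      using sub Mb by (intro emeasure_mono) auto
    also have "\<dots> = emeasure MK {q<..p}" by (rule emeasure_MK[symmetric]) simp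
    also have "\<dots> = 0" using MK_Ioc[OF pq] Fp by simp
    finally show ?thesis by simp
  qed
  finally show ?thesis unfolding R_def .
qed

end

context RH begin

definition "Bad = (\<Union>q\<in>\<rat>. {x. x < q \<and> F x = F q} \<union> {x. q < x \<and> F x = F q})"

lemma Bad_null: "emeasure M (Bad \<inter> K) = 0"
proof -
  have "Bad \<in> null_sets MK"
    unfolding Bad_def
  proof (intro null_sets_UN' countable_rat)
    fix q :: real
    have "{x. x < q \<and> F x = F q} \<in> null_sets MK" using R_null by (auto simp: null_sets_def)
    moreover have "{x. q < x \<and> F x = F q} \<in> null_sets MK" using L_null by (auto simp: null_sets_def)
    ultimately show "{x. x < q \<and> F x = F q} \<union> {x. q < x \<and> F x = F q} \<in> null_sets MK" by auto
  qed
  then have "emeasure MK Bad = 0" by auto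
  moreover have "Bad \<in> sets borel" using \<open>Bad \<in> null_sets MK\<close> by (auto simp: null_sets_def)
  ultimately show ?thesis using emeasure_MK by simp
qed

lemma idx_close: "idx k x = idx k y \<Longrightarrow> \<bar>F x - F y\<bar> < m / 2^k"
proof -
  assume e: "idx k x = idx k y"
  define a where "a = F x * 2^k / m"
  define b where "b = F y * 2^k / m"
  have "0 \<le> a" "0 \<le> b" using F_nonneg m_pos by (auto simp: a_def b_def)
  moreover have "nat \<lfloor>a\<rfloor> = nat \<lfloor>b\<rfloor>" using e by (simp add: idx_def a_def b_def)
  ultimately have "\<bar>a - b\<bar> < 1" by linarith
  moreover have "a - b = (F x - F y) * (2^k / m)" by (simp add: a_def b_def algebra_simps)
  moreover have "\<bar>(F x - F y) * (2^k / m)\<bar> = \<bar>F x - F y\<bar> * (2^k / m)"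
    using m_pos by (simp add: abs_mult)
  ultimately have "\<bar>F x - F y\<bar> * (2^k / m) < 1" by simp
  then show ?thesis using m_pos by (simp add: field_simps)
qed

lemma shrink:
  assumes x: "x \<in> Ks" "x \<notin> Bad" and d: "0 < d"
  shows "\<exists>k. D k (idx k x) \<subseteq> ball x d"
proof -
  have up: "F x < F (x + d)"
  proof (rule ccontr)
    assume "\<not> F x < F (x + d)"
    then have eq: "F (x + d) = F x" using F_mono[of x "x+d"] d by simp
    obtain q where q: "q \<in> \<rat>" "x < q" "q < x + d" using Rats_dense_in_real[of x "x+d"] d by auto
    have "F q = F x" using F_mono[of x q] F_mono[of q "x+d"] q eq by simp
    then have "x \<in> Bad" unfolding Bad_def using q by auto
    then show False using x by simp
  qed
  have down: "F (x - d) < F x"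
  proof (rule ccontr)
    assume "\<not> F (x - d) < F x"
    then have eq: "F (x - d) = F x" using F_mono[of "x - d" x] d by simp
    obtain q where q: "q \<in> \<rat>" "x - d < q" "q < x" using Rats_dense_in_real[of "x - d" x] d by auto
    have "F q = F x" using F_mono[of "x-d" q] F_mono[of q x] q eq by simp
    then have "x \<in> Bad" unfolding Bad_def using q by auto
    then show False using x by simp
  qed
  define e where "e = min (F (x + d) - F x) (F x - F (x - d))"
  have e: "0 < e" using up down by (simp add: e_def)
  obtain k :: nat where k: "m / e < 2^k" using real_arch_pow[of 2 "m / e"] by auto
  have mk: "m / 2^k < e" using k e by (simp add: field_simps)
  have "D k (idx k x) \<subseteq> ball x d"
  proof
    fix y assume y: "y \<in> D k (idx k x)"
    then have "idx k y = idx k x" by (rule D_mem_idx)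
    then have cl: "\<bar>F y - F x\<bar> < e" using idx_close[of k y x] mk by simp
    have "\<not> x + d \<le> y"
    proof
      assume "x + d \<le> y"
      then have "F (x + d) \<le> F y" by (rule F_mono)
      then show False using cl e_def by auto
    qed
    moreover have "\<not> y \<le> x - d"
    proof
      assume "y \<le> x - d"
      then have "F y \<le> F (x - d)" by (rule F_mono)
      then show False using cl e_def by auto
    qed
    ultimately show "y \<in> ball x d" by (auto simp: dist_real_def)
  qed
  then show ?thesis by blast
qed

end

context RH begin

declare g_meas[measurable] wm_borel[measurable]

lemma Bad_meas: "Bad \<in> sets borel"
proof -
  have A: "{x. x < q \<and> F x = F q} \<union> {x. q < x \<and> F x = F q} \<in> sets borel" for q by measurable
  show ?thesis unfolding Bad_def using A by (intro sets.countable_UN'[OF countable_rat]) blast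
qed

lemma BadK_null: "Bad \<inter> K \<in> null_sets M"
proof -
  have "Bad \<inter> K \<in> sets M" using Bad_meas Mb by simp
  then show ?thesis using Bad_null by (simp add: null_sets_def)
qed

lemma S_null: assumes lam: "0 < lam" "lam < lam'"
  shows "emeasure M {x\<in>Ks. g x \<le> ennreal lam \<and> lam' < w x} = 0"
proof -
  define S where "S = {x\<in>Ks. g x \<le> ennreal lam \<and> lam' < w x}"
  have Sb: "S \<in> sets borel" unfolding S_def by measurable
  have SK: "S \<subseteq> K" using Ks_sub S_def by auto
  define s where "s = measure M S"
  have es: "emeasure M S = ennreal s" unfolding s_def by (rule emeasure_fin[OF Sb SK])
  have s0: "0 \<le> s" unfolding s_def by simp
  have MKS: "emeasure MK S = ennreal s" using emeasure_MK[OF Sb] SK es by (simp add: Int_absorb2)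
  have key: "lam' * s \<le> lam * s + lam * eta" if eta: "0 < eta" for eta
  proof -
    have fin: "emeasure MK (space MK) \<noteq> \<infinity>"
      using MK_fin unfolding finite_borel_measure_def by (simp add: finite_measure.emeasure_finite)
    have "emeasure MK S = (INF U\<in>{U. S \<subseteq> U \<and> open U}. emeasure MK U)"
      by (rule outer_regular[of MK S]) (use Sb fin in auto)
    moreover have "emeasure MK S < ennreal s + ennreal eta" using MKS eta by simp
    ultimately obtain V where V: "S \<subseteq> V" "open V" "emeasure MK V < ennreal s + ennreal eta"
      by (auto simp: INF_less_iff)
    define P where "P = (\<lambda>k j. D k j \<subseteq> V \<and> D k j \<inter> S \<noteq> {})"
    define U where "U = {x\<in>Ks. \<exists>k. P k (idx k x)}"
    have Ub: "U \<in> sets borel" unfolding U_def by (rule U_meas)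
    have intU: "(\<integral>\<^sup>+x. ennreal (w x) * indicator U x \<partial>M) \<le> (\<integral>\<^sup>+x. ennreal lam * indicator U x \<partial>M)"
      unfolding U_def
    proof (rule SL_le)
      show "(\<lambda>x. ennreal (w x)) \<in> borel_measurable borel" by simp
      show "(\<lambda>x. ennreal lam) \<in> borel_measurable borel" by simp
      fix k j assume j: "j < 2^k" and Pkj: "P k j"
      then obtain y where y: "y \<in> D k j" "y \<in> S" unfolding P_def by auto
      have yK: "y \<in> Ks" and iy: "idx k y = j" using y D_sub_Ks D_mem_idx by auto
      have "avg k j \<le> g y" unfolding g_def using iy by (intro SUP_upper2[of k]) auto
      also have "\<dots> \<le> ennreal lam" using y S_def by auto
      finally have "wint (D k j) \<le> ennreal (lam * (m / 2^k))" using lam by (intro avg_le_imp) auto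
      also have "\<dots> = ennreal lam * emeasure M (D k j)" unfolding emeasure_D[OF j]
        using lam m_pos by (intro ennreal_mult) auto
      also have "\<dots> = (\<integral>\<^sup>+x. ennreal lam * indicator (D k j) x \<partial>M)" by (rule wint_cmult[symmetric]) simp
      finally show "(\<integral>\<^sup>+x. ennreal (w x) * indicator (D k j) x \<partial>M) \<le> (\<integral>\<^sup>+x. ennreal lam * indicator (D k j) x \<partial>M)"
        unfolding wint_def .
    qed
    have UO: "U \<subseteq> V \<inter> K"
    proof
      fix x assume "x \<in> U"
      then obtain k where x: "x \<in> Ks" "P k (idx k x)" unfolding U_def by auto
      then show "x \<in> V \<inter> K" using mem_D[OF x(1), of k] Ks_sub unfolding P_def by auto
    qed
    have Ob: "V \<in> sets borel" using V by simp
    have "emeasure M U \<le> emeasure M (V \<inter> K)" using UO Ub Ob Mb by (intro emeasure_mono) auto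
    also have "\<dots> = emeasure MK V" by (rule emeasure_MK[symmetric, OF Ob])
    finally have mU: "emeasure M U \<le> ennreal s + ennreal eta" using V by simp
    have SU: "x \<in> U" if xS: "x \<in> S" and xB: "x \<notin> Bad" for x
    proof -
      have xK: "x \<in> Ks" using xS S_def by auto
      have "x \<in> V" using xS V by auto
      then obtain d where d: "0 < d" "ball x d \<subseteq> V" using V(2) open_contains_ball by blast
      obtain k where k: "D k (idx k x) \<subseteq> ball x d" using shrink[OF xK xB d(1)] by blast
      have "P k (idx k x)" unfolding P_def using k d mem_D[OF xK, of k] xS by auto
      then show ?thesis unfolding U_def using xK by auto
    qed
    have "ennreal lam' * ennreal s = (\<integral>\<^sup>+x. ennreal lam' * indicator S x \<partial>M)"
      using wint_cmult[OF Sb, of "ennreal lam'"] es by simp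
    also have "\<dots> \<le> (\<integral>\<^sup>+x. ennreal (w x) * indicator S x \<partial>M)"
    proof (intro nn_integral_mono)
      fix x
      show "ennreal lam' * indicator S x \<le> ennreal (w x) * indicator S x"
      proof (cases "x \<in> S")
        case True then have "lam' \<le> w x" unfolding S_def by simp
        then have "ennreal lam' \<le> ennreal (w x)" by (rule ennreal_leI)
        then show ?thesis using True by simp
      qed simp
    qed
    also have "\<dots> \<le> (\<integral>\<^sup>+x. ennreal (w x) * indicator U x \<partial>M)"
    proof (rule nn_integral_mono_AE)
      have "Bad \<inter> K \<in> null_sets M" by (rule BadK_null)
      then show "AE x in M. ennreal (w x) * indicator S x \<le> ennreal (w x) * indicator U x"
      proof (rule AE_I')
        show "{x \<in> space M. \<not> ennreal (w x) * indicator S x \<le> ennreal (w x) * indicator U x} \<subseteq> Bad \<inter> K"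
        proof
          fix x assume x: "x \<in> {x \<in> space M. \<not> ennreal (w x) * indicator S x \<le> ennreal (w x) * indicator U x}"
          then have nle: "\<not> ennreal (w x) * indicator S x \<le> ennreal (w x) * indicator U x" by simp
          have "x \<in> S"
          proof (rule ccontr)
            assume "x \<notin> S" then show False using nle by simp
          qed
          moreover have "x \<notin> U"
          proof
            assume "x \<in> U" then show False using nle \<open>x \<in> S\<close> by simp
          qed
          ultimately have "x \<in> Bad" using SU by blast
          then show "x \<in> Bad \<inter> K" using \<open>x \<in> S\<close> SK by blast
        qed
      qed
    qed
    also have "\<dots> \<le> (\<integral>\<^sup>+x. ennreal lam * indicator U x \<partial>M)" by (rule intU)
    also have "\<dots> = ennreal lam * emeasure M U" by (rule wint_cmult[OF Ub])
    also have "\<dots> \<le> ennreal lam * (ennreal s + ennreal eta)" by (intro mult_left_mono mU) simp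
    also have "ennreal lam * (ennreal s + ennreal eta) = ennreal (lam * (s + eta))"
      using lam s0 eta by (simp add: ennreal_mult ennreal_plus)
    finally have le: "ennreal lam' * ennreal s \<le> ennreal (lam * (s + eta))" .
    have "ennreal lam' * ennreal s = ennreal (lam' * s)"
      using lam s0 by (intro ennreal_mult[symmetric]) auto
    then have "ennreal (lam' * s) \<le> ennreal (lam * (s + eta))" using le by simp
    then have "lam' * s \<le> lam * (s + eta)" using lam s0 eta by (subst (asm) ennreal_le_iff) auto
    then show ?thesis by (simp add: algebra_simps)
  qed
  have "(lam' - lam) * s \<le> 0"
  proof (rule field_le_epsilon)
    fix e :: real assume e: "0 < e"
    have "lam' * s \<le> lam * s + lam * (e / lam)" using key[of "e / lam"] e lam by simp
    then show "(lam' - lam) * s \<le> 0 + e" using lam by (simp add: algebra_simps)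
  qed
  then have "s = 0" using lam s0 by (simp add: mult_le_0_iff)
  then show ?thesis using es S_def by simp
qed

end

context RH begin

lemma w_le_g: "AE x in M. x \<in> Ks \<longrightarrow> ennreal (w x) \<le> g x"
proof -
  define N where "N = (\<Union>p\<in>{p::rat\<times>rat. 0 < fst p \<and> fst p < snd p}.
      {x\<in>Ks. g x \<le> ennreal (real_of_rat (fst p)) \<and> real_of_rat (snd p) < w x})"
  have "N \<in> null_sets M"
    unfolding N_def
  proof (rule null_sets_UN')
    show "countable {p::rat\<times>rat. 0 < fst p \<and> fst p < snd p}" by (rule countable_subset[OF subset_UNIV countableI_type])
    fix p :: "rat \<times> rat" assume p: "p \<in> {p. 0 < fst p \<and> fst p < snd p}"
    have m: "{x\<in>Ks. g x \<le> ennreal (real_of_rat (fst p)) \<and> real_of_rat (snd p) < w x} \<in> sets M"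
      using Mb by simp
    have "emeasure M {x\<in>Ks. g x \<le> ennreal (real_of_rat (fst p)) \<and> real_of_rat (snd p) < w x} = 0"
      using p by (intro S_null) (auto simp: of_rat_less zero_less_of_rat_iff)
    then show "{x\<in>Ks. g x \<le> ennreal (real_of_rat (fst p)) \<and> real_of_rat (snd p) < w x} \<in> null_sets M"
      using m by (simp add: null_sets_def)
  qed
  then show ?thesis
  proof (rule AE_I')
    show "{x \<in> space M. \<not> (x \<in> Ks \<longrightarrow> ennreal (w x) \<le> g x)} \<subseteq> N"
    proof
      fix x assume "x \<in> {x \<in> space M. \<not> (x \<in> Ks \<longrightarrow> ennreal (w x) \<le> g x)}"
      then have xK: "x \<in> Ks" and lt: "g x < ennreal (w x)" by auto
      then have "g x \<noteq> top" by (auto simp: top_unique)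
      then obtain t where t: "g x = ennreal t" "0 \<le> t" by (cases "g x") auto
      have tw: "t < w x" using lt t by (simp add: ennreal_less_iff wnn)
      obtain q1 where q1: "q1 \<in> \<rat>" "t < q1" "q1 < w x" using Rats_dense_in_real[OF tw] by auto
      obtain q2 where q2: "q2 \<in> \<rat>" "q1 < q2" "q2 < w x" using Rats_dense_in_real[OF q1(3)] by auto
      obtain a where a: "q1 = real_of_rat a" using q1(1) Rats_cases by blast
      obtain b where b: "q2 = real_of_rat b" using q2(1) Rats_cases by blast
      have "0 < real_of_rat a" using q1(2) t(2) a by linarith
      then have pa: "0 < a" by (simp add: zero_less_of_rat_iff)
      have "real_of_rat a < real_of_rat b" using q2 a b by simp
      then have pb: "a < b" by (simp add: of_rat_less)
      note p = pa pb
      have "g x \<le> ennreal (real_of_rat a)" using t q1 a by (simp add: ennreal_leI)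
      then show "x \<in> N" unfolding N_def using p xK q2 b by force
    qed
  qed
qed

end

lemma pw_ftc:
  fixes a q y N :: real
  assumes a: "0 < a" and q: "0 < q" and yN: "y \<le> N"
  shows "(\<integral>\<^sup>+t. ennreal (q * t powr (q - 1)) * indicator {a..N} t * indicator {t. t < y} t \<partial>lborel)
      = (if a < y then ennreal (y powr q - a powr q) else 0)"
proof (cases "a < y")
  case True
  have "(\<integral>\<^sup>+t. ennreal (q * t powr (q - 1)) * indicator {a..N} t * indicator {t. t < y} t \<partial>lborel)
      = (\<integral>\<^sup>+t. ennreal (q * t powr (q - 1)) * indicator {a..y} t \<partial>lborel)"
  proof (rule nn_integral_cong_AE)
    show "AE t in lborel. ennreal (q * t powr (q - 1)) * indicator {a..N} t * indicator {t. t < y} t =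
        ennreal (q * t powr (q - 1)) * indicator {a..y} t"
      using AE_lborel_singleton[of y]
    proof (rule AE_mp, intro AE_I2 impI)
      fix t :: real assume "t \<noteq> y"
      then show "ennreal (q * t powr (q - 1)) * indicator {a..N} t * indicator {t. t < y} t =
        ennreal (q * t powr (q - 1)) * indicator {a..y} t"
        using yN by (auto simp: indicator_def)
    qed
  qed
  also have "\<dots> = ennreal (y powr q - a powr q)"
  proof (rule nn_integral_FTC_Icc)
    show "(\<lambda>t. q * t powr (q - 1)) \<in> borel_measurable borel" by measurable
    fix t assume t: "t \<in> {a..y}"
    then have "0 < t" using a by auto
    then show "((\<lambda>t. t powr q) has_real_derivative q * t powr (q - 1)) (at t)"
      by (rule has_real_derivative_powr)
    show "0 \<le> q * t powr (q - 1)" using q by simp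
  next
    show "a \<le> y" using True by simp
  qed
  finally show ?thesis using True by simp
next
  case False
  have e: "(\<lambda>t. ennreal (q * t powr (q - 1)) * indicator {a..N} t * indicator {t. t < y} t) = (\<lambda>t. 0)"
    by (rule ext) (use False in \<open>auto simp: indicator_def\<close>)
  show ?thesis using False by (simp only: e) simp
qed

context RH begin

lemma MK_sf: "sigma_finite_measure MK"
  using MK_fin unfolding finite_borel_measure_def finite_measure_def by simp

lemma tonelli:
  fixes phi :: "real \<Rightarrow> ennreal" and y :: "real \<Rightarrow> real" and h :: "real \<Rightarrow> ennreal"
  assumes [measurable]: "phi \<in> borel_measurable borel" "y \<in> borel_measurable borel" "h \<in> borel_measurable borel"
  shows "(\<integral>\<^sup>+x. (\<integral>\<^sup>+t. phi t * indicator {t. t < y x} t \<partial>lborel) * h x \<partial>MK)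
       = (\<integral>\<^sup>+t. phi t * (\<integral>\<^sup>+x. indicator {x. t < y x} x * h x \<partial>MK) \<partial>lborel)"
proof -
  interpret P: pair_sigma_finite lborel MK
    unfolding pair_sigma_finite_def using MK_sf lborel.sigma_finite_measure_axioms by simp
  have mMK: "borel_measurable MK = borel_measurable borel" by (rule measurable_cong_sets) simp_all
  have mP: "(\<lambda>(t, x). phi t * indicator {t. t < y x} t * h x) \<in> borel_measurable (lborel \<Otimes>\<^sub>M MK)"
  proof -
    have "sets (lborel \<Otimes>\<^sub>M MK) = sets (lborel \<Otimes>\<^sub>M (borel::real measure))"
      by (intro sets_pair_measure_cong) simp_all
    then have e: "borel_measurable (lborel \<Otimes>\<^sub>M MK) = borel_measurable (lborel \<Otimes>\<^sub>M (borel::real measure))"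
      by (intro measurable_cong_sets) simp_all
    have mm: "(\<lambda>(t, x). phi t * indicator {t. t < y x} t * h x) \<in> borel_measurable (lborel \<Otimes>\<^sub>M (borel::real measure))"
      unfolding indicator_def by measurable
    show ?thesis by (subst e) (rule mm)
  qed
  have "(\<integral>\<^sup>+x. (\<integral>\<^sup>+t. phi t * indicator {t. t < y x} t \<partial>lborel) * h x \<partial>MK)
      = (\<integral>\<^sup>+x. (\<integral>\<^sup>+t. phi t * indicator {t. t < y x} t * h x \<partial>lborel) \<partial>MK)"
  proof (intro nn_integral_cong)
    fix x
    show "(\<integral>\<^sup>+t. phi t * indicator {t. t < y x} t \<partial>lborel) * h x = (\<integral>\<^sup>+t. phi t * indicator {t. t < y x} t * h x \<partial>lborel)"
      by (rule nn_integral_multc[symmetric]) (unfold indicator_def, measurable)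
  qed
  also have "\<dots> = (\<integral>\<^sup>+t. (\<integral>\<^sup>+x. phi t * indicator {t. t < y x} t * h x \<partial>MK) \<partial>lborel)"
    using P.Fubini'[OF mP] by simp
  also have "\<dots> = (\<integral>\<^sup>+t. phi t * (\<integral>\<^sup>+x. indicator {x. t < y x} x * h x \<partial>MK) \<partial>lborel)"
  proof (intro nn_integral_cong)
    fix t
    have "(\<integral>\<^sup>+x. phi t * indicator {t. t < y x} t * h x \<partial>MK) = (\<integral>\<^sup>+x. phi t * (indicator {x. t < y x} x * h x) \<partial>MK)"
      by (intro nn_integral_cong) (simp add: indicator_def)
    also have "\<dots> = phi t * (\<integral>\<^sup>+x. indicator {x. t < y x} x * h x \<partial>MK)"
      by (rule nn_integral_cmult) (unfold mMK indicator_def, measurable)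
    finally show "(\<integral>\<^sup>+x. phi t * indicator {t. t < y x} t * h x \<partial>MK) = phi t * (\<integral>\<^sup>+x. indicator {x. t < y x} x * h x \<partial>MK)" .
  qed
  finally show ?thesis .
qed

end

context RH begin

lemma MK_int: assumes f: "f \<in> borel_measurable borel" and z: "\<And>x. x \<notin> Ks \<Longrightarrow> f x = 0"
  shows "(\<integral>\<^sup>+x. f x \<partial>MK) = (\<integral>\<^sup>+x. f x \<partial>M)"
proof -
  have "(\<integral>\<^sup>+x. f x \<partial>MK) = (\<integral>\<^sup>+x. indicator K x * f x \<partial>M)"
    unfolding MK_def by (rule nn_integral_density) (use f in \<open>simp_all add: bmM\<close>)
  also have "\<dots> = (\<integral>\<^sup>+x. f x \<partial>M)"
  proof (intro nn_integral_cong)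
    fix x show "indicator K x * f x = f x"
      using z[of x] Ks_sub by (cases "x \<in> K") auto
  qed
  finally show ?thesis .
qed

definition "yN N x = enn2real (min (g x) (ennreal N))"

lemma yN_meas[measurable]: "yN N \<in> borel_measurable borel"
  unfolding yN_def by measurable

lemma yN_nonneg: "0 \<le> yN N x" unfolding yN_def by simp

lemma yN_le: "0 \<le> N \<Longrightarrow> yN N x \<le> N"
  unfolding yN_def by (cases "g x \<le> ennreal N") (auto simp: min_def enn2real_leI)

lemma yN_le_g: "ennreal (yN N x) \<le> g x"
proof (cases "g x \<le> ennreal N")
  case True
  then have "g x \<noteq> top" by (auto simp: top_unique)
  then show ?thesis using True unfolding yN_def by (simp add: min_def less_top)
next
  case False
  then show ?thesis unfolding yN_def by (auto simp: min_def)
qed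

lemma yN_less: assumes "0 \<le> t" "t < N" shows "t < yN N x \<longleftrightarrow> ennreal t < g x"
proof (cases "g x \<le> ennreal N")
  case True
  then have gt: "g x \<noteq> top" by (auto simp: top_unique)
  then obtain s where s: "g x = ennreal s" "0 \<le> s" by (cases "g x") auto
  have "yN N x = s" unfolding yN_def using True s by (simp add: min_def)
  then show ?thesis using s assms by (simp add: ennreal_less_iff)
next
  case False
  then have "yN N x = N" unfolding yN_def using assms by (simp add: min_def)
  moreover have "ennreal t < g x" using False assms by (meson ennreal_lessI less_le_trans not_le order.strict_trans)
  ultimately show ?thesis using assms by simp
qed

lemma set_yN: assumes "0 \<le> t" "t < N"
  shows "indicator {x. t < yN N x} x * indicator Ks x = (indicator {x\<in>Ks. ennreal t < g x} x :: ennreal)"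
  using yN_less[OF assms, of x] by (cases "x \<in> Ks") (auto simp: indicator_def)

lemma set_yN0: assumes "N \<le> t" "0 \<le> N"
  shows "indicator {x. t < yN N x} x = (0::ennreal)"
  using yN_le[OF assms(2), of x] assms by (simp add: indicator_def)

end

context RH begin

definition "Gm N t = (\<integral>\<^sup>+x. indicator {x. t < yN N x} x * indicator Ks x \<partial>MK)"

lemma E_meas: "{x\<in>Ks. ennreal t < g x} \<in> sets borel" by measurable

lemma Gm_eq: assumes "0 \<le> t" "t < N" shows "Gm N t = emeasure M {x\<in>Ks. ennreal t < g x}"
proof -
  have "Gm N t = (\<integral>\<^sup>+x. indicator {x\<in>Ks. ennreal t < g x} x \<partial>MK)"
    unfolding Gm_def using set_yN[OF assms] by simp
  also have "\<dots> = (\<integral>\<^sup>+x. indicator {x\<in>Ks. ennreal t < g x} x \<partial>M)"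
    by (rule MK_int) (auto simp: indicator_def)
  also have "\<dots> = emeasure M {x\<in>Ks. ennreal t < g x}"
    using E_meas Mb by (intro nn_integral_indicator) simp
  finally show ?thesis .
qed

lemma CZ1m: assumes a: "avg 0 0 \<le> ennreal t" and t: "0 \<le> t" and N: "0 \<le> N"
  shows "(\<integral>\<^sup>+x. indicator {x. t < yN N x} x * (ennreal (w x) * indicator Ks x) \<partial>MK) \<le> ennreal (2*t) * Gm N t"
proof (cases "t < N")
  case True
  have "(\<integral>\<^sup>+x. indicator {x. t < yN N x} x * (ennreal (w x) * indicator Ks x) \<partial>MK)
      = (\<integral>\<^sup>+x. ennreal (w x) * indicator {x\<in>Ks. ennreal t < g x} x \<partial>MK)"
  proof (intro nn_integral_cong)
    fix x
    have "indicator {x. t < yN N x} x * (ennreal (w x) * indicator Ks x) = ennreal (w x) * (indicator {x. t < yN N x} x * indicator Ks x)"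
      by (rule mult.left_commute)
    also have "\<dots> = ennreal (w x) * indicator {x\<in>Ks. ennreal t < g x} x" by (simp only: set_yN[OF t True])
    finally show "indicator {x. t < yN N x} x * (ennreal (w x) * indicator Ks x) = ennreal (w x) * indicator {x\<in>Ks. ennreal t < g x} x" .
  qed
  also have "\<dots> = (\<integral>\<^sup>+x. ennreal (w x) * indicator {x\<in>Ks. ennreal t < g x} x \<partial>M)"
    by (rule MK_int) (auto simp: indicator_def)
  also have "\<dots> \<le> (\<integral>\<^sup>+x. ennreal (2*t) * indicator {x\<in>Ks. ennreal t < g x} x \<partial>M)"
    by (rule CZ1[OF a t])
  also have "\<dots> = ennreal (2*t) * emeasure M {x\<in>Ks. ennreal t < g x}"
    by (rule wint_cmult[OF E_meas])
  also have "\<dots> = ennreal (2*t) * Gm N t" using Gm_eq[OF t True] by simp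
  finally show ?thesis .
next
  case False
  then have "(\<lambda>x. indicator {x. t < yN N x} x * (ennreal (w x) * indicator Ks x)) = (\<lambda>x. 0::ennreal)"
    using set_yN0[of N t] N by (intro ext) simp
  then show ?thesis by simp
qed

lemma CZ2m: assumes a: "avg 0 0 \<le> ennreal t" and t: "0 \<le> t" and N: "0 \<le> N" and Wf: "wint K < \<infinity>"
  shows "(\<integral>\<^sup>+x. indicator {x. t < yN N x} x * (ennreal (yN N x) * indicator Ks x) \<partial>MK)
     \<le> FW_Ainf M w * ennreal (2*t) * Gm N t"
proof (cases "t < N")
  case True
  have "(\<integral>\<^sup>+x. indicator {x. t < yN N x} x * (ennreal (yN N x) * indicator Ks x) \<partial>MK)
      = (\<integral>\<^sup>+x. ennreal (yN N x) * indicator {x\<in>Ks. ennreal t < g x} x \<partial>MK)"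
  proof (intro nn_integral_cong)
    fix x
    have "indicator {x. t < yN N x} x * (ennreal (yN N x) * indicator Ks x) = ennreal (yN N x) * (indicator {x. t < yN N x} x * indicator Ks x)"
      by (rule mult.left_commute)
    also have "\<dots> = ennreal (yN N x) * indicator {x\<in>Ks. ennreal t < g x} x" by (simp only: set_yN[OF t True])
    finally show "indicator {x. t < yN N x} x * (ennreal (yN N x) * indicator Ks x) = ennreal (yN N x) * indicator {x\<in>Ks. ennreal t < g x} x" .
  qed
  also have "\<dots> = (\<integral>\<^sup>+x. ennreal (yN N x) * indicator {x\<in>Ks. ennreal t < g x} x \<partial>M)"
    by (rule MK_int) (auto simp: indicator_def)
  also have "\<dots> \<le> (\<integral>\<^sup>+x. g x * indicator {x\<in>Ks. ennreal t < g x} x \<partial>M)"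
    by (intro nn_integral_mono mult_right_mono yN_le_g) simp
  also have "\<dots> \<le> (\<integral>\<^sup>+x. (FW_Ainf M w * ennreal (2*t)) * indicator {x\<in>Ks. ennreal t < g x} x \<partial>M)"
    by (rule CZ2[OF a t Wf])
  also have "\<dots> = FW_Ainf M w * ennreal (2*t) * emeasure M {x\<in>Ks. ennreal t < g x}"
    by (rule wint_cmult[OF E_meas])
  also have "\<dots> = FW_Ainf M w * ennreal (2*t) * Gm N t" using Gm_eq[OF t True] by simp
  finally show ?thesis .
next
  case False
  then have "(\<lambda>x. indicator {x. t < yN N x} x * (ennreal (yN N x) * indicator Ks x)) = (\<lambda>x. 0::ennreal)"
    using set_yN0[of N t] N by (intro ext) simp
  then show ?thesis by simp
qed

lemma G3m: assumes W0: "0 < wint K" and Wf: "wint K < \<infinity>"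
  shows "(\<integral>\<^sup>+x. ennreal (yN N x) * indicator Ks x \<partial>MK) \<le> FW_Ainf M w * wint K"
proof -
  have "(\<integral>\<^sup>+x. ennreal (yN N x) * indicator Ks x \<partial>MK) = (\<integral>\<^sup>+x. ennreal (yN N x) * indicator Ks x \<partial>M)"
    by (rule MK_int) (auto simp: indicator_def)
  also have "\<dots> \<le> (\<integral>\<^sup>+x. maxfun M (\<lambda>y. w y * indicator K y) x * indicator K x \<partial>M)"
  proof (intro nn_integral_mono)
    fix x
    show "ennreal (yN N x) * indicator Ks x \<le> maxfun M (\<lambda>y. w y * indicator K y) x * indicator K x"
    proof (cases "x \<in> Ks")
      case True
      then have "ennreal (yN N x) \<le> maxfun M (\<lambda>y. w y * indicator K y) x"
        using yN_le_g[of N x] g_le_maxfun_K[OF True] by simp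
      then show ?thesis using True Ks_sub by auto
    qed simp
  qed
  also have "\<dots> \<le> FW_Ainf M w * wint K"
    using FW_bound[OF _ W0 Wf] by (simp add: K_def)
  finally show ?thesis .
qed

end

lemma powr_1p: "0 \<le> (y::real) \<Longrightarrow> y powr (1 + p) = y * y powr p"
  by (cases "y = 0") (auto simp: powr_add)

lemma pwC:
  fixes a p y N :: real
  assumes a: "0 < a" and p: "0 < p" and y: "0 \<le> y" "y \<le> N"
  shows "ennreal (y powr p) \<le> ennreal (a powr p) +
    (\<integral>\<^sup>+t. ennreal (p * t powr (p - 1)) * indicator {a..N} t * indicator {t. t < y} t \<partial>lborel)"
proof (cases "a < y")
  case True
  have "a powr p \<le> y powr p" using True a p by (intro powr_mono2) auto
  then have "ennreal (y powr p) = ennreal (a powr p) + ennreal (y powr p - a powr p)"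
    by (subst ennreal_plus[symmetric]) auto
  then show ?thesis unfolding pw_ftc[OF a p y(2)] using True by simp
next
  case False
  then have "y powr p \<le> a powr p" using y p by (intro powr_mono2) auto
  then show ?thesis unfolding pw_ftc[OF a p y(2)] using False by (simp add: ennreal_leI)
qed

lemma pwA:
  fixes a p y N :: real
  assumes a: "0 < a" and p: "0 < p" and y: "0 \<le> y" "y \<le> N"
  shows "ennreal (y powr (1 + p)) \<le> ennreal (a powr p) * ennreal y +
    (\<integral>\<^sup>+t. ennreal (p * t powr (p - 1)) * indicator {a..N} t * indicator {t. t < y} t \<partial>lborel) * ennreal y"
proof -
  have "ennreal (y powr (1 + p)) = ennreal y * ennreal (y powr p)"
    using y by (simp add: powr_1p ennreal_mult)
  also have "\<dots> \<le> ennreal y * (ennreal (a powr p) +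
    (\<integral>\<^sup>+t. ennreal (p * t powr (p - 1)) * indicator {a..N} t * indicator {t. t < y} t \<partial>lborel))"
    by (intro mult_left_mono pwC[OF a p y]) simp
  finally show ?thesis by (simp add: algebra_simps)
qed

lemma pwB:
  fixes a p y N :: real
  assumes a: "0 < a" and p: "0 < p" and y: "0 \<le> y" "y \<le> N"
  shows "(\<integral>\<^sup>+t. ennreal ((1 + p) * t powr p) * indicator {a..N} t * indicator {t. t < y} t \<partial>lborel)
     \<le> ennreal (y powr (1 + p))"
proof -
  have q: "0 < 1 + p" using p by simp
  have "(\<integral>\<^sup>+t. ennreal ((1 + p) * t powr p) * indicator {a..N} t * indicator {t. t < y} t \<partial>lborel)
     = (if a < y then ennreal (y powr (1 + p) - a powr (1 + p)) else 0)"
    using pw_ftc[OF a q y(2)] by simp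
  also have "\<dots> \<le> ennreal (y powr (1 + p))" by (auto intro!: ennreal_leI)
  finally show ?thesis .
qed

lemma ennreal_identity:
  fixes t p C :: real
  assumes t: "0 < t" and p: "0 < p" and C: "0 \<le> C"
  shows "ennreal (p * t powr (p - 1)) * (ennreal C * ennreal (2 * t))
       = ennreal (2 * C * p / (1 + p)) * ennreal ((1 + p) * t powr p)"
proof -
  have e: "t powr (p - 1) * t = t powr p" using t by (simp add: powr_diff field_simps)
  have r1: "p * t powr (p - 1) * (C * (2 * t)) = 2 * C * p * (t powr (p - 1) * t)" by (simp add: algebra_simps)
  have r2: "2 * C * p / (1 + p) * ((1 + p) * t powr p) = 2 * C * p * t powr p" using p by (simp add: field_simps)
  have r: "p * t powr (p - 1) * (C * (2 * t)) = 2 * C * p / (1 + p) * ((1 + p) * t powr p)"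
    by (simp only: r1 r2 e)
  have "ennreal (p * t powr (p - 1)) * (ennreal C * ennreal (2 * t)) = ennreal (p * t powr (p - 1) * (C * (2 * t)))"
    using t p C by (simp add: ennreal_mult)
  also have "\<dots> = ennreal (2 * C * p / (1 + p) * ((1 + p) * t powr p))" by (simp only: r)
  also have "\<dots> = ennreal (2 * C * p / (1 + p)) * ennreal ((1 + p) * t powr p)"
    using t p C by (intro ennreal_mult) auto
  finally show ?thesis .
qed

context RH begin

lemma bmMK: "borel_measurable MK = borel_measurable borel"
  by (rule measurable_cong_sets) simp_all

lemma Gm_meas[measurable]: "Gm N \<in> borel_measurable borel"
proof -
  interpret S: sigma_finite_measure MK by (rule MK_sf)
  have "sets ((borel::real measure) \<Otimes>\<^sub>M MK) = sets ((borel::real measure) \<Otimes>\<^sub>M (borel::real measure))"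
    by (intro sets_pair_measure_cong) simp_all
  then have e: "borel_measurable ((borel::real measure) \<Otimes>\<^sub>M MK) = borel_measurable ((borel::real measure) \<Otimes>\<^sub>M (borel::real measure))"
    by (intro measurable_cong_sets) simp_all
  have mm: "(\<lambda>(t, x). indicator {x. t < yN N x} x * indicator Ks x :: ennreal) \<in> borel_measurable ((borel::real measure) \<Otimes>\<^sub>M (borel::real measure))"
    unfolding indicator_def by measurable
  have "(\<lambda>(t, x). indicator {x. t < yN N x} x * indicator Ks x :: ennreal) \<in> borel_measurable ((borel::real measure) \<Otimes>\<^sub>M MK)"
    by (subst e) (rule mm)
  then have "(\<lambda>t. \<integral>\<^sup>+x. indicator {x. t < yN N x} x * indicator Ks x \<partial>MK) \<in> borel_measurable borel"
    using S.borel_measurable_nn_integral_fst[of "\<lambda>(t, x). indicator {x. t < yN N x} x * indicator Ks x" borel]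
    by simp
  then show ?thesis unfolding Gm_def[abs_def] .
qed

lemma chain:
  fixes a0 p N C0 :: real
  assumes a0: "0 < a0" and avg: "avg 0 0 \<le> ennreal a0" and N: "a0 < N" and p: "0 < p"
    and C0: "0 \<le> C0" "FW_Ainf M w = ennreal C0" and W0: "0 < wint K" and Wf: "wint K < \<infinity>"
  defines "Z \<equiv> (\<integral>\<^sup>+t. (ennreal ((1 + p) * t powr p) * indicator {a0..N} t) * Gm N t \<partial>lborel)"
  defines "Phi \<equiv> (\<integral>\<^sup>+x. ennreal (yN N x powr (1 + p)) * indicator Ks x \<partial>MK)"
  defines "Psi \<equiv> (\<integral>\<^sup>+x. ennreal (w x * yN N x powr p) * indicator Ks x \<partial>MK)"
  shows "Phi \<le> ennreal (a0 powr p) * (ennreal C0 * wint K) + ennreal (2 * C0 * p / (1 + p)) * Z"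
    and "Z \<le> Phi"
    and "Psi \<le> ennreal (a0 powr p) * wint K + ennreal (2 * p / (1 + p)) * Z"
proof -
  define y where "y = yN N"
  have N0: "0 \<le> N" using a0 N by simp
  have y0: "0 \<le> y x" for x unfolding y_def by (rule yN_nonneg)
  have yN': "y x \<le> N" for x unfolding y_def using N0 by (rule yN_le)
  have ym[measurable]: "y \<in> borel_measurable borel" unfolding y_def by simp
  define phi1 where "phi1 t = ennreal (p * t powr (p - 1)) * indicator {a0..N} t" for t
  define phi2 where "phi2 t = ennreal ((1 + p) * t powr p) * indicator {a0..N} t" for t
  define I1 where "I1 x = (\<integral>\<^sup>+t. phi1 t * indicator {t. t < y x} t \<partial>lborel)" for x
  have I1c: "I1 x = (if a0 < y x then ennreal (y x powr p - a0 powr p) else 0)" for x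
    unfolding I1_def phi1_def using pw_ftc[OF a0 p yN'[of x]] by simp
  have I1m[measurable]: "I1 \<in> borel_measurable borel"
    unfolding I1c[abs_def] by measurable
  have phi1m[measurable]: "phi1 \<in> borel_measurable borel" unfolding phi1_def by measurable
  have phi2m[measurable]: "phi2 \<in> borel_measurable borel" unfolding phi2_def by measurable
  have avgt: "avg 0 0 \<le> ennreal t" if "t \<in> {a0..N}" for t
    using avg that by (meson atLeastAtMost_iff ennreal_leI order.trans)
  have t0: "0 \<le> t" if "t \<in> {a0..N}" for t using that a0 by auto
  have Zdef: "Z = (\<integral>\<^sup>+t. phi2 t * Gm N t \<partial>lborel)" unfolding Z_def phi2_def ..

  have "Phi \<le> (\<integral>\<^sup>+x. (ennreal (a0 powr p) * (ennreal (y x) * indicator Ks x) + I1 x * (ennreal (y x) * indicator Ks x)) \<partial>MK)"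
    unfolding Phi_def y_def[symmetric]
  proof (intro nn_integral_mono)
    fix x
    have "ennreal (y x powr (1 + p)) \<le> ennreal (a0 powr p) * ennreal (y x) + I1 x * ennreal (y x)"
      unfolding I1_def phi1_def using pwA[OF a0 p y0 yN'] by simp
    then show "ennreal (y x powr (1 + p)) * indicator Ks x \<le>
        ennreal (a0 powr p) * (ennreal (y x) * indicator Ks x) + I1 x * (ennreal (y x) * indicator Ks x)"
      by (cases "x \<in> Ks") (simp_all add: algebra_simps)
  qed
  also have "\<dots> = ennreal (a0 powr p) * (\<integral>\<^sup>+x. ennreal (y x) * indicator Ks x \<partial>MK) + (\<integral>\<^sup>+x. I1 x * (ennreal (y x) * indicator Ks x) \<partial>MK)"
    by (subst nn_integral_add) (simp_all add: bmMK nn_integral_cmult)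
  finally have I0: "Phi \<le> ennreal (a0 powr p) * (\<integral>\<^sup>+x. ennreal (y x) * indicator Ks x \<partial>MK) + (\<integral>\<^sup>+x. I1 x * (ennreal (y x) * indicator Ks x) \<partial>MK)" .
  have "(\<integral>\<^sup>+x. I1 x * (ennreal (y x) * indicator Ks x) \<partial>MK)
      = (\<integral>\<^sup>+t. phi1 t * (\<integral>\<^sup>+x. indicator {x. t < y x} x * (ennreal (y x) * indicator Ks x) \<partial>MK) \<partial>lborel)"
    unfolding I1_def by (rule tonelli) simp_all
  also have "\<dots> \<le> (\<integral>\<^sup>+t. phi1 t * (FW_Ainf M w * ennreal (2*t) * Gm N t) \<partial>lborel)"
  proof (intro nn_integral_mono)
    fix t
    show "phi1 t * (\<integral>\<^sup>+x. indicator {x. t < y x} x * (ennreal (y x) * indicator Ks x) \<partial>MK)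
        \<le> phi1 t * (FW_Ainf M w * ennreal (2*t) * Gm N t)"
    proof (cases "t \<in> {a0..N}")
      case True
      show ?thesis unfolding y_def
        by (intro mult_left_mono CZ2m[OF avgt[OF True] t0[OF True] N0 Wf]) simp
    qed (simp add: phi1_def)
  qed
  also have "\<dots> = (\<integral>\<^sup>+t. ennreal (2 * C0 * p / (1 + p)) * (phi2 t * Gm N t) \<partial>lborel)"
  proof (intro nn_integral_cong)
    fix t
    show "phi1 t * (FW_Ainf M w * ennreal (2*t) * Gm N t) = ennreal (2 * C0 * p / (1 + p)) * (phi2 t * Gm N t)"
    proof (cases "t \<in> {a0..N}")
      case True
      then have tp: "0 < t" using a0 by auto
      have "phi1 t * (FW_Ainf M w * ennreal (2*t) * Gm N t) = (ennreal (p * t powr (p - 1)) * (ennreal C0 * ennreal (2 * t))) * Gm N t"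
        unfolding phi1_def C0(2) using True by (simp add: mult.assoc)
      also have "\<dots> = (ennreal (2 * C0 * p / (1 + p)) * ennreal ((1 + p) * t powr p)) * Gm N t"
        by (simp only: ennreal_identity[OF tp p C0(1)])
      also have "\<dots> = ennreal (2 * C0 * p / (1 + p)) * (phi2 t * Gm N t)"
        unfolding phi2_def using True by (simp add: mult.assoc)
      finally show ?thesis .
    qed (simp add: phi1_def phi2_def)
  qed
  also have "\<dots> = ennreal (2 * C0 * p / (1 + p)) * Z"
    unfolding Zdef by (rule nn_integral_cmult) simp
  finally have I1b: "(\<integral>\<^sup>+x. I1 x * (ennreal (y x) * indicator Ks x) \<partial>MK) \<le> ennreal (2 * C0 * p / (1 + p)) * Z" .
  have I: "Phi \<le> ennreal (a0 powr p) * (\<integral>\<^sup>+x. ennreal (y x) * indicator Ks x \<partial>MK) + ennreal (2 * C0 * p / (1 + p)) * Z"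
    using I0 I1b by (meson add_left_mono order_trans)
  have "(\<integral>\<^sup>+x. ennreal (y x) * indicator Ks x \<partial>MK) \<le> ennreal C0 * wint K"
    unfolding y_def using G3m[OF W0 Wf, of N] C0(2) by simp
  with I show "Phi \<le> ennreal (a0 powr p) * (ennreal C0 * wint K) + ennreal (2 * C0 * p / (1 + p)) * Z"
    by (meson add_right_mono mult_left_mono order_trans zero_le)

  have "Z = (\<integral>\<^sup>+t. phi2 t * (\<integral>\<^sup>+x. indicator {x. t < y x} x * indicator Ks x \<partial>MK) \<partial>lborel)"
    unfolding Zdef Gm_def y_def ..
  also have "\<dots> = (\<integral>\<^sup>+x. (\<integral>\<^sup>+t. phi2 t * indicator {t. t < y x} t \<partial>lborel) * indicator Ks x \<partial>MK)"
    by (rule tonelli[symmetric]) simp_all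
  also have "\<dots> \<le> Phi"
    unfolding Phi_def y_def[symmetric]
  proof (intro nn_integral_mono)
    fix x
    have "(\<integral>\<^sup>+t. phi2 t * indicator {t. t < y x} t \<partial>lborel) \<le> ennreal (y x powr (1 + p))"
      unfolding phi2_def using pwB[OF a0 p y0 yN'] by simp
    then show "(\<integral>\<^sup>+t. phi2 t * indicator {t. t < y x} t \<partial>lborel) * indicator Ks x \<le> ennreal (y x powr (1 + p)) * indicator Ks x"
      by (intro mult_right_mono) simp_all
  qed
  finally show "Z \<le> Phi" .

  have "Psi \<le> (\<integral>\<^sup>+x. (ennreal (a0 powr p) * (ennreal (w x) * indicator Ks x) + I1 x * (ennreal (w x) * indicator Ks x)) \<partial>MK)"
    unfolding Psi_def y_def[symmetric]
  proof (intro nn_integral_mono)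
    fix x
    have "ennreal (y x powr p) \<le> ennreal (a0 powr p) + I1 x"
      unfolding I1_def phi1_def using pwC[OF a0 p y0 yN'] by simp
    then have "ennreal (w x) * ennreal (y x powr p) \<le> ennreal (w x) * (ennreal (a0 powr p) + I1 x)"
      by (intro mult_left_mono) simp_all
    moreover have "ennreal (w x * y x powr p) = ennreal (w x) * ennreal (y x powr p)"
      using wnn[of x] by (simp add: ennreal_mult)
    ultimately have "ennreal (w x * y x powr p) \<le> ennreal (a0 powr p) * ennreal (w x) + I1 x * ennreal (w x)"
      by (simp add: algebra_simps)
    then show "ennreal (w x * y x powr p) * indicator Ks x \<le>
        ennreal (a0 powr p) * (ennreal (w x) * indicator Ks x) + I1 x * (ennreal (w x) * indicator Ks x)"
      by (cases "x \<in> Ks") (simp_all add: algebra_simps)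
  qed
  also have "\<dots> = ennreal (a0 powr p) * (\<integral>\<^sup>+x. ennreal (w x) * indicator Ks x \<partial>MK) + (\<integral>\<^sup>+x. I1 x * (ennreal (w x) * indicator Ks x) \<partial>MK)"
    by (subst nn_integral_add) (simp_all add: bmMK nn_integral_cmult)
  finally have P0: "Psi \<le> ennreal (a0 powr p) * (\<integral>\<^sup>+x. ennreal (w x) * indicator Ks x \<partial>MK) + (\<integral>\<^sup>+x. I1 x * (ennreal (w x) * indicator Ks x) \<partial>MK)" .
  have WK: "(\<integral>\<^sup>+x. ennreal (w x) * indicator Ks x \<partial>MK) = wint K"
  proof -
    have "(\<integral>\<^sup>+x. ennreal (w x) * indicator Ks x \<partial>MK) = (\<integral>\<^sup>+x. ennreal (w x) * indicator Ks x \<partial>M)"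
      by (rule MK_int) simp_all
    then show ?thesis using wint_Ks unfolding wint_def by simp
  qed
  have "(\<integral>\<^sup>+x. I1 x * (ennreal (w x) * indicator Ks x) \<partial>MK)
      = (\<integral>\<^sup>+t. phi1 t * (\<integral>\<^sup>+x. indicator {x. t < y x} x * (ennreal (w x) * indicator Ks x) \<partial>MK) \<partial>lborel)"
    unfolding I1_def by (rule tonelli) simp_all
  also have "\<dots> \<le> (\<integral>\<^sup>+t. phi1 t * (ennreal (2*t) * Gm N t) \<partial>lborel)"
  proof (intro nn_integral_mono)
    fix t
    show "phi1 t * (\<integral>\<^sup>+x. indicator {x. t < y x} x * (ennreal (w x) * indicator Ks x) \<partial>MK)
        \<le> phi1 t * (ennreal (2*t) * Gm N t)"
    proof (cases "t \<in> {a0..N}")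
      case True
      show ?thesis unfolding y_def
        by (intro mult_left_mono CZ1m[OF avgt[OF True] t0[OF True] N0]) simp
    qed (simp add: phi1_def)
  qed
  also have "\<dots> = (\<integral>\<^sup>+t. ennreal (2 * p / (1 + p)) * (phi2 t * Gm N t) \<partial>lborel)"
  proof (intro nn_integral_cong)
    fix t
    show "phi1 t * (ennreal (2*t) * Gm N t) = ennreal (2 * p / (1 + p)) * (phi2 t * Gm N t)"
    proof (cases "t \<in> {a0..N}")
      case True
      then have tp: "0 < t" using a0 by auto
      have "phi1 t * (ennreal (2*t) * Gm N t) = (ennreal (p * t powr (p - 1)) * (ennreal 1 * ennreal (2 * t))) * Gm N t"
        unfolding phi1_def using True by (simp add: mult.assoc)
      also have "\<dots> = (ennreal (2 * 1 * p / (1 + p)) * ennreal ((1 + p) * t powr p)) * Gm N t"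
        by (simp only: ennreal_identity[OF tp p, of 1])
      also have "\<dots> = ennreal (2 * p / (1 + p)) * (phi2 t * Gm N t)"
        unfolding phi2_def using True by (simp add: mult.assoc)
      finally show ?thesis .
    qed (simp add: phi1_def phi2_def)
  qed
  also have "\<dots> = ennreal (2 * p / (1 + p)) * Z"
    unfolding Zdef by (rule nn_integral_cmult) simp
  finally have P1: "(\<integral>\<^sup>+x. I1 x * (ennreal (w x) * indicator Ks x) \<partial>MK) \<le> ennreal (2 * p / (1 + p)) * Z" .
  show "Psi \<le> ennreal (a0 powr p) * wint K + ennreal (2 * p / (1 + p)) * Z"
    using P0 P1 unfolding WK by (meson add_left_mono order_trans)
qed

end

lemma real_absorb:
  fixes phi z u C0 p :: real
  assumes p: "0 < p" and C0: "0 \<le> C0" and pC: "4 * C0 * p < 1 + p" and u: "0 \<le> u"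
    and z: "0 \<le> z" "z \<le> phi"
    and I: "phi \<le> u * C0 + (2 * C0 * p / (1 + p)) * phi"
  shows "u + (2 * p / (1 + p)) * z \<le> 2 * u"
proof -
  define T2 where "T2 = 2 * p / (1 + p)"
  define t where "t = C0 * T2"
  have T2: "0 \<le> T2" using p by (simp add: T2_def)
  have t0: "0 \<le> t" using T2 C0 by (simp add: t_def)
  have th: "t * 2 < 1"
  proof -
    have "t * 2 = 4 * C0 * p / (1 + p)" by (simp add: t_def T2_def)
    also have "\<dots> < 1" using pC p by (simp add: divide_less_eq)
    finally show ?thesis .
  qed
  have "(2 * C0 * p / (1 + p)) * phi = t * phi" by (simp add: t_def T2_def mult_ac)
  then have I': "phi \<le> u * C0 + t * phi" using I by simp
  then have "(1 - t) * phi \<le> u * C0" by (simp add: algebra_simps)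
  then have "T2 * ((1 - t) * phi) \<le> T2 * (u * C0)" using T2 by (rule mult_left_mono)
  then have A: "(1 - t) * (T2 * phi) \<le> u * t" by (simp add: t_def algebra_simps)
  have "u * t \<le> u * (1 - t)" using u th by (intro mult_left_mono) auto
  with A have "(1 - t) * (T2 * phi) \<le> (1 - t) * u" by (simp add: algebra_simps)
  then have "T2 * phi \<le> u" using th by (simp add: mult_le_cancel_left_pos)
  moreover have "T2 * z \<le> T2 * phi" using T2 z by (intro mult_left_mono) auto
  ultimately show ?thesis by (simp add: T2_def)
qed

context RH begin

lemma psi_bound:
  fixes a0 p N C0 Wr :: real
  assumes a0: "0 < a0" and avg: "avg 0 0 \<le> ennreal a0" and N: "a0 < N" and p: "0 < p"
    and C0: "0 \<le> C0" "FW_Ainf M w = ennreal C0" and W0: "0 < wint K" and Wr: "wint K = ennreal Wr" "0 \<le> Wr"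
    and pC: "4 * C0 * p < 1 + p"
  shows "(\<integral>\<^sup>+x. ennreal (w x * yN N x powr p) * indicator Ks x \<partial>MK) \<le> ennreal (2 * a0 powr p * Wr)"
proof -
  have Wf: "wint K < \<infinity>" using Wr by simp
  define Z where "Z = (\<integral>\<^sup>+t. (ennreal ((1 + p) * t powr p) * indicator {a0..N} t) * Gm N t \<partial>lborel)"
  define Phi where "Phi = (\<integral>\<^sup>+x. ennreal (yN N x powr (1 + p)) * indicator Ks x \<partial>MK)"
  define Psi where "Psi = (\<integral>\<^sup>+x. ennreal (w x * yN N x powr p) * indicator Ks x \<partial>MK)"
  note ch = chain[OF a0 avg N p C0 W0 Wf]
  have c1: "Phi \<le> ennreal (a0 powr p) * (ennreal C0 * wint K) + ennreal (2 * C0 * p / (1 + p)) * Z"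
    using ch(1) unfolding Phi_def Z_def .
  have c2: "Z \<le> Phi" using ch(2) unfolding Phi_def Z_def .
  have c3: "Psi \<le> ennreal (a0 powr p) * wint K + ennreal (2 * p / (1 + p)) * Z"
    using ch(3) unfolding Psi_def Z_def .
  have N0: "0 \<le> N" using a0 N by simp
  have "Phi \<le> (\<integral>\<^sup>+x. ennreal (N powr (1 + p)) * indicator Ks x \<partial>MK)"
    unfolding Phi_def
  proof (intro nn_integral_mono mult_right_mono ennreal_leI)
    fix x show "yN N x powr (1 + p) \<le> N powr (1 + p)"
      using yN_nonneg yN_le[OF N0] p by (intro powr_mono2) auto
  qed simp
  also have "\<dots> = ennreal (N powr (1 + p)) * emeasure MK Ks"
    by (rule nn_integral_cmult_indicator) simp
  also have "\<dots> < \<infinity>" using emeasure_MK[of Ks] Ks_sub emeasure_Ks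
    by (simp add: Int_absorb2 ennreal_mult_less_top)
  finally have Phif: "Phi < \<infinity>" .
  obtain phi where phi: "Phi = ennreal phi" "0 \<le> phi" using Phif by (cases Phi) auto
  obtain z where z: "Z = ennreal z" "0 \<le> z" using c2 Phif by (cases Z) auto
  have zphi: "z \<le> phi" using c2 phi z by (simp add: ennreal_le_iff)
  have t0: "0 \<le> 2 * C0 * p / (1 + p)" using C0 p by simp
  have "ennreal phi \<le> ennreal (a0 powr p * Wr * C0 + (2 * C0 * p / (1 + p)) * phi)"
  proof -
    have e1: "ennreal (a0 powr p) * (ennreal C0 * wint K) = ennreal (a0 powr p * Wr * C0)"
      using Wr C0 by (simp add: ennreal_mult mult_ac)
    have e2: "ennreal (2 * C0 * p / (1 + p)) * Z = ennreal ((2 * C0 * p / (1 + p)) * z)"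
      unfolding z(1) by (simp only: ennreal_mult[OF t0 z(2)])
    have e3: "ennreal (a0 powr p * Wr * C0) + ennreal ((2 * C0 * p / (1 + p)) * z)
        = ennreal (a0 powr p * Wr * C0 + (2 * C0 * p / (1 + p)) * z)"
    proof -
      have n1: "0 \<le> a0 powr p * Wr * C0" using Wr C0 by simp
      have n2: "0 \<le> (2 * C0 * p / (1 + p)) * z" using t0 z(2) by (rule mult_nonneg_nonneg)
      show ?thesis by (rule ennreal_plus[OF n1 n2, symmetric])
    qed
    have "ennreal (a0 powr p) * (ennreal C0 * wint K) + ennreal (2 * C0 * p / (1 + p)) * Z
        = ennreal (a0 powr p * Wr * C0 + (2 * C0 * p / (1 + p)) * z)"
      unfolding e1 e2 e3 ..
    then show ?thesis using c1 c2 phi z t0 zphi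
      by (smt (verit, ccfv_SIG) ennreal_leI mult_left_mono order_trans add_left_mono)
  qed
  moreover have nnR: "0 \<le> a0 powr p * Wr * C0 + (2 * C0 * p / (1 + p)) * phi"
    using Wr(2) C0(1) t0 phi(2) by (intro add_nonneg_nonneg mult_nonneg_nonneg) auto
  ultimately have Ir: "phi \<le> a0 powr p * Wr * C0 + (2 * C0 * p / (1 + p)) * phi"
    by (simp only: ennreal_le_iff[OF nnR])
  have fin: "a0 powr p * Wr + (2 * p / (1 + p)) * z \<le> 2 * (a0 powr p * Wr)"
    using real_absorb[OF p C0(1) pC _ z(2) zphi Ir] Wr by simp
  have "Psi \<le> ennreal (a0 powr p) * wint K + ennreal (2 * p / (1 + p)) * Z" by (rule c3)
  also have "\<dots> = ennreal (a0 powr p * Wr + (2 * p / (1 + p)) * z)"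
  proof -
    have f1: "ennreal (a0 powr p) * wint K = ennreal (a0 powr p * Wr)" using Wr by (simp add: ennreal_mult)
    have q0: "0 \<le> 2 * p / (1 + p)" using p by simp
    have f2: "ennreal (2 * p / (1 + p)) * Z = ennreal ((2 * p / (1 + p)) * z)"
      unfolding z(1) by (simp only: ennreal_mult[OF q0 z(2)])
    have n1: "0 \<le> a0 powr p * Wr" using Wr by simp
    have n2: "0 \<le> (2 * p / (1 + p)) * z" using q0 z(2) by (rule mult_nonneg_nonneg)
    have f3: "ennreal (a0 powr p * Wr) + ennreal ((2 * p / (1 + p)) * z) = ennreal (a0 powr p * Wr + (2 * p / (1 + p)) * z)"
      by (rule ennreal_plus[OF n1 n2, symmetric])
    show ?thesis unfolding f1 f2 f3 ..
  qed
  also have "\<dots> \<le> ennreal (2 * a0 powr p * Wr)" using fin by (intro ennreal_leI) (simp add: mult.assoc)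
  finally show ?thesis unfolding Psi_def .
qed

end

context RH begin

lemma min_le_yN: assumes "ennreal (w x) \<le> g x" "0 \<le> N"
  shows "min (w x) N \<le> yN N x"
proof (cases "g x \<le> ennreal N")
  case True
  then have gt: "g x \<noteq> top" by (auto simp: top_unique)
  then obtain s where s: "g x = ennreal s" "0 \<le> s" by (cases "g x") auto
  have "yN N x = s" unfolding yN_def using True s by (simp add: min_def)
  moreover have "w x \<le> s" using assms(1) s by (simp add: ennreal_le_iff)
  ultimately show ?thesis by simp
next
  case False
  then have "yN N x = N" unfolding yN_def using assms by (simp add: min_def)
  then show ?thesis by simp
qed

lemma int_K_Ks: "f \<in> borel_measurable borel \<Longrightarrow> (\<integral>\<^sup>+x. f x * indicator Ks x \<partial>M) = (\<integral>\<^sup>+x. f x * indicator K x \<partial>M)"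
proof (intro nn_integral_cong_AE)
  have "K - Ks \<in> null_sets M" using null_K_Ks Mb by (auto simp: null_sets_def)
  then show "AE x in M. f x * indicator Ks x = f x * indicator K x"
    by (rule AE_I') (use Ks_sub in \<open>auto simp: indicator_def\<close>)
qed

lemma RH_result:
  fixes p :: real
  assumes W0: "0 < wint K" and Wf: "wint K < \<infinity>" and FWf: "FW_Ainf M w < \<infinity>" and p: "0 < p"
    and pC: "4 * enn2real (FW_Ainf M w) * p < 1 + p"
  shows "(\<integral>\<^sup>+x. ennreal (w x powr (1 + p)) * indicator K x \<partial>M)
     \<le> ennreal (2 * (enn2real (wint K) / m) powr p * enn2real (wint K))"
proof -
  define Wr where "Wr = enn2real (wint K)"
  have Wr: "wint K = ennreal Wr" "0 \<le> Wr" using Wf by (auto simp: Wr_def less_top)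
  define a0 where "a0 = Wr / m"
  have Wr0: "0 < Wr" using W0 Wr by simp
  have a0: "0 < a0" using Wr0 m_pos by (simp add: a0_def)
  have avg: "avg 0 0 \<le> ennreal a0"
    unfolding avg00 Wr(1) a0_def using Wr(2) m_pos by (simp add: divide_ennreal)
  define C0 where "C0 = enn2real (FW_Ainf M w)"
  have C0: "0 \<le> C0" "FW_Ainf M w = ennreal C0" using FWf by (auto simp: C0_def less_top)
  have pC': "4 * C0 * p < 1 + p" using pC by (simp add: C0_def)
  define B where "B = ennreal (2 * a0 powr p * Wr)"
  define f where "f n x = ennreal (w x * min (w x) (a0 + 1 + real n) powr p) * indicator Ks x" for n x
  have fm: "f n \<in> borel_measurable M" for n unfolding f_def using wm_borel by (simp add: bmM)
  have fB: "integral\<^sup>N M (f n) \<le> B" for n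
  proof -
    define N where "N = a0 + 1 + real n"
    have N: "a0 < N" "0 \<le> N" using a0 by (auto simp: N_def)
    have "integral\<^sup>N M (f n) \<le> (\<integral>\<^sup>+x. ennreal (w x * yN N x powr p) * indicator Ks x \<partial>M)"
    proof (rule nn_integral_mono_AE)
      show "AE x in M. f n x \<le> ennreal (w x * yN N x powr p) * indicator Ks x"
        using w_le_g
      proof (rule AE_mp, intro AE_I2 impI)
        fix x assume h: "x \<in> Ks \<longrightarrow> ennreal (w x) \<le> g x"
        show "f n x \<le> ennreal (w x * yN N x powr p) * indicator Ks x"
        proof (cases "x \<in> Ks")
          case True
          then have "min (w x) N \<le> yN N x" using h min_le_yN N by auto
          then have "min (w x) N powr p \<le> yN N x powr p" using p wnn[of x] N by (intro powr_mono2) auto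
          then have "w x * min (w x) N powr p \<le> w x * yN N x powr p" using wnn[of x] by (rule mult_left_mono)
          then show ?thesis unfolding f_def N_def[symmetric] using True by (simp add: ennreal_leI)
        qed (simp add: f_def)
      qed
    qed
    also have "\<dots> = (\<integral>\<^sup>+x. ennreal (w x * yN N x powr p) * indicator Ks x \<partial>MK)"
      by (rule MK_int[symmetric]) (simp_all add: wm_borel)
    also have "\<dots> \<le> B" unfolding B_def by (rule psi_bound[OF a0 avg N(1) p C0 W0 Wr pC'])
    finally show ?thesis .
  qed
  have inc: "incseq f"
  proof (intro incseq_SucI le_funI)
    fix n x
    have "min (w x) (a0 + 1 + real n) \<le> min (w x) (a0 + 1 + real (Suc n))" by simp
    then have "min (w x) (a0 + 1 + real n) powr p \<le> min (w x) (a0 + 1 + real (Suc n)) powr p"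
      using p wnn[of x] a0 by (intro powr_mono2) auto
    then have "w x * min (w x) (a0 + 1 + real n) powr p \<le> w x * min (w x) (a0 + 1 + real (Suc n)) powr p"
      using wnn[of x] by (rule mult_left_mono)
    then show "f n x \<le> f (Suc n) x" unfolding f_def by (intro mult_right_mono ennreal_leI) auto
  qed
  have sup: "(SUP n. f n x) = ennreal (w x powr (1 + p)) * indicator Ks x" for x
  proof (rule antisym)
    have "f n x \<le> ennreal (w x powr (1 + p)) * indicator Ks x" for n
    proof -
      have "min (w x) (a0 + 1 + real n) powr p \<le> w x powr p" using p wnn[of x] a0 by (intro powr_mono2) auto
      then have "w x * min (w x) (a0 + 1 + real n) powr p \<le> w x * w x powr p" using wnn[of x] by (rule mult_left_mono)
      then show ?thesis unfolding f_def using powr_1p[OF wnn[of x], of p] by (intro mult_right_mono ennreal_leI) auto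
    qed
    then show "(SUP n. f n x) \<le> ennreal (w x powr (1 + p)) * indicator Ks x" by (rule SUP_least)
    obtain n :: nat where n: "w x \<le> real n" using real_arch_simple by blast
    have "min (w x) (a0 + 1 + real n) = w x" using n a0 by simp
    then have "f n x = ennreal (w x powr (1 + p)) * indicator Ks x"
      unfolding f_def using powr_1p[OF wnn[of x], of p] by simp
    then show "ennreal (w x powr (1 + p)) * indicator Ks x \<le> (SUP n. f n x)" by (metis SUP_upper UNIV_I)
  qed
  have "(\<integral>\<^sup>+x. ennreal (w x powr (1 + p)) * indicator K x \<partial>M) = (\<integral>\<^sup>+x. ennreal (w x powr (1 + p)) * indicator Ks x \<partial>M)"
    by (rule int_K_Ks[symmetric]) (simp add: wm_borel)
  also have "\<dots> = (\<integral>\<^sup>+x. (SUP n. f n x) \<partial>M)" using sup by simp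
  also have "\<dots> = (SUP n. integral\<^sup>N M (f n))" by (rule nn_integral_monotone_convergence_SUP[OF inc fm])
  also have "\<dots> \<le> B" using fB by (rule SUP_least)
  finally show ?thesis unfolding B_def a0_def Wr_def by (simp add: mult.assoc)
qed

end

theorem theorem4p1:
  fixes M :: "real measure" and w :: "real \<Rightarrow> real" and \<epsilon> :: real and I :: "real set"
  assumes borel: "sets M = sets borel"
    and radon: "\<And>K. compact K \<Longrightarrow> emeasure M K < \<infinity>"
    and nonatomic: "\<And>x. emeasure M {x} = 0"
    and w_meas: "w \<in> borel_measurable M"
    and w_nonneg: "\<And>x. 0 \<le> w x"
    and Ainf_fin: "FW_Ainf M w < \<infinity>"
    and eps_pos: "0 < \<epsilon>"
    and eps_small: "\<epsilon> < 1 / (4 * enn2real (FW_Ainf M w) - 1)"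
    and I_int: "is_interval I" and I_bdd: "bounded I"
    and I_pos: "0 < emeasure M I"
  shows "(\<integral>\<^sup>+ x\<in>I. ennreal (w x powr (1 + \<epsilon>)) \<partial>M) / emeasure M I
           \<le> 2 * enn_powr ((\<integral>\<^sup>+ x\<in>I. ennreal (w x) \<partial>M) / emeasure M I) (1 + \<epsilon>)"
proof -
  have Ine: "I \<noteq> {}" using I_pos by auto
  define l where "l = Inf I"
  define r where "r = Sup I"
  have bb: "bdd_below I" "bdd_above I" using I_bdd by (auto intro: bounded_imp_bdd_below bounded_imp_bdd_above)
  have sub: "I \<subseteq> {l..r}"
  proof
    fix x assume "x \<in> I"
    then show "x \<in> {l..r}" unfolding l_def r_def using bb by (auto intro: cInf_lower cSup_upper)
  qed
  have mid: "{l<..<r} \<subseteq> I"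
  proof
    fix x assume x: "x \<in> {l<..<r}"
    then have "Inf I < x" unfolding l_def by simp
    then obtain a where a: "a \<in> I" "a < x" using cInf_less_iff[OF Ine bb(1)] by auto
    have "x < Sup I" using x unfolding r_def by simp
    then obtain b where b: "b \<in> I" "x < b" using less_cSup_iff[OF Ine bb(2)] by auto
    show "x \<in> I" using I_int a b unfolding is_interval_1 by (meson less_imp_le)
  qed
  have Ieq: "I = {l<..<r} \<union> (I \<inter> {l, r})" using sub mid by auto
  have Imeas: "I \<in> sets borel"
  proof -
    have "finite (I \<inter> {l, r})" by simp
    then have "I \<inter> {l, r} \<in> sets borel" by (simp add: finite_imp_closed borel_closed)
    then show ?thesis by (subst Ieq) auto
  qed
  have null2: "{l, r} \<in> null_sets M"
  proof -
    have "emeasure M ({l} \<union> {r}) \<le> emeasure M {l} + emeasure M {r}"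
      using borel by (intro emeasure_subadditive) auto
    moreover have "{l} \<union> {r} = {l, r}" by auto
    ultimately have "emeasure M {l, r} = 0" using nonatomic by simp
    then show ?thesis using borel by (auto simp: null_sets_def)
  qed
  have lr: "l < r"
  proof (rule ccontr)
    assume "\<not> l < r"
    then have "I \<subseteq> {l, r}" using sub by auto
    then have "emeasure M I \<le> emeasure M {l, r}" using borel Imeas by (intro emeasure_mono) auto
    then show False using null2 I_pos by auto
  qed
  have AEeq: "AE x in M. indicator I x = (indicator {l..r} x :: ennreal)"
    using null2
  proof (rule AE_I')
    show "{x \<in> space M. indicator I x \<noteq> (indicator {l..r} x :: ennreal)} \<subseteq> {l, r}"
    proof
      fix x assume x: "x \<in> {x \<in> space M. indicator I x \<noteq> (indicator {l..r} x :: ennreal)}"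
      show "x \<in> {l, r}"
      proof (rule ccontr)
        assume nx: "x \<notin> {l, r}"
        show False
        proof (cases "x \<in> {l..r}")
          case True
          then have "x \<in> {l<..<r}" using nx by auto
          then have "x \<in> I" using mid by auto
          then show False using x True by simp
        next
          case False
          then have "x \<notin> I" using sub by auto
          then show False using x False by simp
        qed
      qed
    qed
  qed
  have intcong: "(\<integral>\<^sup>+x\<in>I. f x \<partial>M) = (\<integral>\<^sup>+x. f x * indicator {l..r} x \<partial>M)" for f :: "real \<Rightarrow> ennreal"
    using AEeq by (intro nn_integral_cong_AE) auto
  have KI: "emeasure M I = emeasure M {l..r}"
  proof -
    have "emeasure M I = (\<integral>\<^sup>+x. indicator I x \<partial>M)" using borel Imeas by simp
    also have "\<dots> = (\<integral>\<^sup>+x. indicator {l..r} x \<partial>M)" using AEeq by (intro nn_integral_cong_AE) auto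
    also have "\<dots> = emeasure M {l..r}" using borel by simp
    finally show ?thesis .
  qed
  have Kfin: "emeasure M {l..r} < \<infinity>" by (rule radon) simp
  interpret RH M w l r
    by unfold_locales (use borel nonatomic lr Kfin KI I_pos w_meas w_nonneg in auto)
  have mI: "emeasure M I = ennreal m" using KI emeasure_K by (simp add: K_def)
  have WI: "(\<integral>\<^sup>+ x\<in>I. ennreal (w x) \<partial>M) = wint K" unfolding intcong wint_def K_def ..
  have PI: "(\<integral>\<^sup>+ x\<in>I. ennreal (w x powr (1 + \<epsilon>)) \<partial>M) = (\<integral>\<^sup>+x. ennreal (w x powr (1 + \<epsilon>)) * indicator K x \<partial>M)"
    unfolding intcong K_def ..
  show ?thesis
  proof (cases "wint K = \<infinity>")
    case True
    have "wint K / ennreal m = \<infinity>" using True m_pos by (simp add: ennreal_top_divide)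
    then show ?thesis unfolding WI mI by (simp add: enn_powr_def)
  next
    case Wfin: False
    show ?thesis
    proof (cases "wint K = 0")
      case True
      have m1: "(\<lambda>x. ennreal (w x) * indicator K x) \<in> borel_measurable M" unfolding bmM by measurable
      have m2: "(\<lambda>x. ennreal (w x powr (1 + \<epsilon>)) * indicator K x) \<in> borel_measurable M" unfolding bmM by measurable
      from True have "AE x in M. ennreal (w x) * indicator K x = 0"
        unfolding wint_def using m1 by (subst (asm) nn_integral_0_iff_AE) auto
      then have "AE x in M. ennreal (w x powr (1 + \<epsilon>)) * indicator K x = 0"
      proof (rule AE_mp, intro AE_I2 impI)
        fix x assume h: "ennreal (w x) * indicator K x = 0"
        show "ennreal (w x powr (1 + \<epsilon>)) * indicator K x = 0"
        proof (cases "x \<in> K")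
          case True
          then have "w x \<le> 0" using h by (simp add: ennreal_eq_0_iff)
          then have "w x = 0" using wnn[of x] by simp
          then show ?thesis by simp
        qed simp
      qed
      then have "(\<integral>\<^sup>+x. ennreal (w x powr (1 + \<epsilon>)) * indicator K x \<partial>M) = 0"
        using m2 by (simp add: nn_integral_0_iff_AE)
      then show ?thesis unfolding PI by simp
    next
      case W0': False
      have W0: "0 < wint K" using W0' by (simp add: zero_less_iff_neq_zero)
      have Wf: "wint K < \<infinity>" using Wfin by (simp add: less_top)
      define C where "C = enn2real (FW_Ainf M w)"
      have pC: "4 * C * \<epsilon> < 1 + \<epsilon>"
      proof -
        have pos: "0 < 4 * C - 1"
        proof (rule ccontr)
          assume "\<not> 0 < 4 * C - 1"
          then have "4 * C - 1 \<le> 0" by simp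
          then have d: "1 / (4 * C - 1) \<le> 0" by (intro divide_nonneg_nonpos) auto
          have "\<epsilon> < 1 / (4 * C - 1)" using eps_small unfolding C_def .
          then show False using d eps_pos by linarith
        qed
        have "\<epsilon> * (4 * C - 1) < 1" using eps_small pos unfolding C_def[symmetric] by (simp add: less_divide_eq)
        then show ?thesis by (simp add: algebra_simps)
      qed
      define Wr where "Wr = enn2real (wint K)"
      have Wr: "wint K = ennreal Wr" "0 < Wr" using Wf W0 by (auto simp: Wr_def less_top enn2real_positive_iff)
      define a where "a = Wr / m"
      have a: "0 < a" using Wr m_pos by (simp add: a_def)
      have main: "(\<integral>\<^sup>+x. ennreal (w x powr (1 + \<epsilon>)) * indicator K x \<partial>M) \<le> ennreal (2 * a powr \<epsilon> * Wr)"
        using RH_result[OF W0 Wf Ainf_fin eps_pos] pC unfolding C_def a_def Wr_def by simp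
      have "(\<integral>\<^sup>+x. ennreal (w x powr (1 + \<epsilon>)) * indicator K x \<partial>M) / ennreal m \<le> ennreal (2 * a powr \<epsilon> * Wr) / ennreal m"
        by (rule divide_right_mono_ennreal[OF main])
      also have "\<dots> = ennreal (2 * a powr \<epsilon> * Wr / m)" using Wr m_pos by (intro divide_ennreal) auto
      also have "2 * a powr \<epsilon> * Wr / m = 2 * a powr (1 + \<epsilon>)"
        using powr_1p[of a \<epsilon>] a by (simp add: a_def)
      also have "ennreal (2 * a powr (1 + \<epsilon>)) = 2 * enn_powr (wint K / ennreal m) (1 + \<epsilon>)"
      proof -
        have "wint K / ennreal m = ennreal a" unfolding Wr(1) a_def using Wr m_pos by (intro divide_ennreal) auto
        then show ?thesis using a by (simp add: enn_powr_def ennreal_mult)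
      qed
      finally show ?thesis unfolding PI WI mI .
    qed
  qed
qed


end
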